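(* Let $\mathbb F$ be any field, $n\ge k>1$, let $\mathcal K\subseteq M_{n\times k}(\mathbb F)$ be a linear variety, let $B^*\subseteq[n]\times[k]$ be a cobasis of $\mathcal M(\mathcal K)$, let $1\le j'\le k$ be such that $B^*\cap([n]\times\{j'\})=\varnothing$, let $1\le i'\le n$ and $c_1,\dots,c_n\in\mathbb F$. Put $$\mathcal K'=\{X(i'|j') : X\in\mathcal K,\ X_{i\,j'}=c_i\text{ for all }1\le i\le n\}\subseteq M_{(n-1)\times(k-1)}(\mathbb F).$$ Then: (a) $\mathcal K'$ is a linear variety; (b) $\operatorname{codim}(\mathcal K')\le\operatorname{codim}(\mathcal K)-|B^*\cap(\{i'\}\times[k])|$; (c) if ${B'}^*$ is a cobasis of $\mathcal M(\mathcal K')$, then $\big(B^*\cap(\{i'\}\times[k])\big)\cup\iota({B'}^* )$ is a coindependent set of $\mathcal M(\mathcal K)$; (d) if $\det_{n,k}(X)=0$ for all $X\in\mathcal K$ and $c_i=\delta_{i\,i'}$ for all $i$, then $\det_{n-1,k-1}(X')=0$ for all $X'\in\mathcal K'$.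
   Context: $X(i'|j')$ denotes the matrix obtained from $X$ by deleting row $i'$ and column $j'$. The map $\iota=\iota^{(i',j')}:[n-1]\times[k-1]\to[n]\times[k]$ is $\iota(a,b)=(a',b')$ with $a'=a+1$ if $a\ge i'$ and $a'=a$ otherwise, $b'=b+1$ if $b\ge j'$ and $b'=b$ otherwise (it sends the position of an entry of $X(i'|j')$ to its position in $X$). A linear variety is a nonempty set $\mathbf s+V$ with $V$ a linear subspace (uniquely determined); codimension = ambient dimension minus $\dim V$ (ambient spaces $M_{n\times k}$ and $M_{(n-1)\times(k-1)}$ respectively). Identify $M_{n\times k}(\mathbb F)$ with $\mathbb F^{[n]\times[k]}$. Matroid $\mathcal M(\mathcal K)$ of $\mathcal K=\mathbf s+V\subseteq\mathbb F^E$: matroid on $E$ with rank function $r(S)=\dim\operatorname{span}\{x_e|_V:e\in S\}$, $x_e$ coordinate functionals. Cobasis = complement of a basis; coindependent set = subset of a cobasis. Cullis' determinant: $\det_{n,k}(X)=\sum_{c}\operatorname{sgn}(c)\det(X[c|))$, sum over $k$-subsets $c=\{c(1)<\dots<c(k)\}$ of $[n]$, $X[c|)$ the submatrix of rows in $c$, $\operatorname{sgn}(c)=(-1)^{\sum_\alpha(c(\alpha)-\alpha)}$. *)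

theory Defs
  imports Main "HOL.Vector_Spaces" "HOL-Library.Function_Algebras" "HOL-Combinatorics.Permutations"
begin

text \<open>Elements of \<open>F^E\<close> (and matrices in \<open>M_{n x k}(F)\<close>, identified with
  \<open>F^{[n] x [k]}\<close>) are represented as functions \<open>nat \<times> nat \<Rightarrow> 'a\<close> vanishing
  outside the index set \<open>E\<close>.\<close>

definition supp_on :: "(nat \<times> nat) set \<Rightarrow> (nat \<times> nat \<Rightarrow> 'a::zero) set" where
  "supp_on E = {f. \<forall>x. x \<notin> E \<longrightarrow> f x = 0}"

definition idx :: "nat \<Rightarrow> nat \<Rightarrow> (nat \<times> nat) set" where
  "idx n k = {1..n} \<times> {1..k}"

definition fscale :: "'a::field \<Rightarrow> ('b \<Rightarrow> 'a) \<Rightarrow> ('b \<Rightarrow> 'a)" where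
  "fscale c f = (\<lambda>x. c * f x)"

definition fdim :: "('b \<Rightarrow> 'a::field) set \<Rightarrow> nat" where
  "fdim A = vector_space.dim fscale A"

definition lin_subspace :: "(nat \<times> nat) set \<Rightarrow> (nat \<times> nat \<Rightarrow> 'a::field) set \<Rightarrow> bool" where
  "lin_subspace E V \<longleftrightarrow> V \<subseteq> supp_on E \<and> 0 \<in> V \<and>
     (\<forall>u\<in>V. \<forall>v\<in>V. u + v \<in> V) \<and> (\<forall>c. \<forall>v\<in>V. fscale c v \<in> V)"

definition linear_variety :: "(nat \<times> nat) set \<Rightarrow> (nat \<times> nat \<Rightarrow> 'a::field) set \<Rightarrow> bool" where
  "linear_variety E K \<longleftrightarrow>
     (\<exists>s V. s \<in> supp_on E \<and> lin_subspace E V \<and> K = (\<lambda>v. s + v) ` V)"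

text \<open>The (uniquely determined) direction space \<open>V\<close> of \<open>K = s + V\<close> is \<open>K - K\<close>.\<close>
definition direction :: "(nat \<times> nat \<Rightarrow> 'a::field) set \<Rightarrow> (nat \<times> nat \<Rightarrow> 'a) set" where
  "direction K = {x - y |x y. x \<in> K \<and> y \<in> K}"

definition codim :: "(nat \<times> nat) set \<Rightarrow> (nat \<times> nat \<Rightarrow> 'a::field) set \<Rightarrow> nat" where
  "codim E K = card E - fdim (direction K)"

text \<open>Matroid \<open>M(K)\<close>: rank of \<open>S\<close> is the dimension of the span of the coordinate
  functionals \<open>x_e\<close>, \<open>e \<in> S\<close>, restricted to \<open>V\<close> (extended by 0 off \<open>V\<close>).\<close>
definition coord_restr :: "(nat \<times> nat \<Rightarrow> 'a::field) set \<Rightarrow> nat \<times> nat \<Rightarrow> ((nat \<times> nat \<Rightarrow> 'a) \<Rightarrow> 'a)" where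
  "coord_restr V e = (\<lambda>v. if v \<in> V then v e else 0)"

definition mrank :: "(nat \<times> nat \<Rightarrow> 'a::field) set \<Rightarrow> (nat \<times> nat) set \<Rightarrow> nat" where
  "mrank K S = fdim (module.span fscale (coord_restr (direction K) ` S))"

definition m_indep :: "(nat \<times> nat) set \<Rightarrow> (nat \<times> nat \<Rightarrow> 'a::field) set \<Rightarrow> (nat \<times> nat) set \<Rightarrow> bool" where
  "m_indep E K S \<longleftrightarrow> S \<subseteq> E \<and> mrank K S = card S"

definition m_basis :: "(nat \<times> nat) set \<Rightarrow> (nat \<times> nat \<Rightarrow> 'a::field) set \<Rightarrow> (nat \<times> nat) set \<Rightarrow> bool" where
  "m_basis E K B \<longleftrightarrow> m_indep E K B \<and> (\<forall>S. B \<subset> S \<and> S \<subseteq> E \<longrightarrow> \<not> m_indep E K S)"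

definition m_cobasis :: "(nat \<times> nat) set \<Rightarrow> (nat \<times> nat \<Rightarrow> 'a::field) set \<Rightarrow> (nat \<times> nat) set \<Rightarrow> bool" where
  "m_cobasis E K C \<longleftrightarrow> (\<exists>B. m_basis E K B \<and> C = E - B)"

definition m_coindep :: "(nat \<times> nat) set \<Rightarrow> (nat \<times> nat \<Rightarrow> 'a::field) set \<Rightarrow> (nat \<times> nat) set \<Rightarrow> bool" where
  "m_coindep E K C \<longleftrightarrow> (\<exists>D. m_cobasis E K D \<and> C \<subseteq> D)"

definition iota :: "nat \<Rightarrow> nat \<Rightarrow> nat \<times> nat \<Rightarrow> nat \<times> nat" where
  "iota i' j' = (\<lambda>(a, b). (if a \<ge> i' then a + 1 else a, if b \<ge> j' then b + 1 else b))"

definition delete_rc :: "nat \<Rightarrow> nat \<Rightarrow> nat \<Rightarrow> nat \<Rightarrow> (nat \<times> nat \<Rightarrow> 'a::zero) \<Rightarrow> (nat \<times> nat \<Rightarrow> 'a)" where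
  "delete_rc n k i' j' X = (\<lambda>p. if p \<in> idx (n - 1) (k - 1) then X (iota i' j' p) else 0)"

definition sqdet :: "nat \<Rightarrow> (nat \<times> nat \<Rightarrow> 'a::comm_ring_1) \<Rightarrow> 'a" where
  "sqdet k M = (\<Sum>p | p permutes {1..k}. of_int (sign p) * (\<Prod>i\<in>{1..k}. M (i, p i)))"

text \<open>Cullis' determinant; \<open>c(\<alpha>)\<close> is the \<open>\<alpha>\<close>-th smallest element of \<open>c\<close>.\<close>
definition cullis :: "nat \<Rightarrow> nat \<Rightarrow> (nat \<times> nat \<Rightarrow> 'a::comm_ring_1) \<Rightarrow> 'a" where
  "cullis n k X = (\<Sum>c | c \<subseteq> {1..n} \<and> card c = k.
      (- 1) ^ (\<Sum>\<alpha>\<in>{1..k}. sorted_list_of_set c ! (\<alpha> - 1) - \<alpha>) *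
      sqdet k (\<lambda>(\<alpha>, \<beta>). X (sorted_list_of_set c ! (\<alpha> - 1), \<beta>)))"

end

theory Submission
  imports Defs "Jordan_Normal_Form.Determinant"
begin


lemma fscale_vs: "vector_space (fscale :: 'a::field \<Rightarrow> ('b \<Rightarrow> 'a) \<Rightarrow> ('b \<Rightarrow> 'a))"
  by unfold_locales (auto simp: fscale_def func_plus algebra_simps)

interpretation fv: vector_space "fscale :: 'a::field \<Rightarrow> ('b \<Rightarrow> 'a) \<Rightarrow> ('b \<Rightarrow> 'a)"
  by (rule fscale_vs)

lemma fdim_eq: "fdim A = fv.dim A"
  by (simp add: fdim_def)

lemma sum_fun_apply: "(\<Sum>x\<in>A. f x) p = (\<Sum>x\<in>A. f x p)"
  by (induction A rule: infinite_finite_induct) (auto simp: func_plus func_zero)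

lemma fscale_apply[simp]: "fscale c f p = c * f p"
  by (simp add: fscale_def)

definition subsp :: "(nat \<times> nat \<Rightarrow> 'a::field) set \<Rightarrow> bool" where
  "subsp V \<longleftrightarrow> 0 \<in> V \<and> (\<forall>u\<in>V. \<forall>v\<in>V. u + v \<in> V) \<and> (\<forall>c. \<forall>v\<in>V. fscale c v \<in> V)"

lemma lin_subspace_subsp: "lin_subspace E V \<Longrightarrow> subsp V"
  by (simp add: lin_subspace_def subsp_def)

lemma subsp_add: "subsp V \<Longrightarrow> u \<in> V \<Longrightarrow> v \<in> V \<Longrightarrow> u + v \<in> V"
  by (simp add: subsp_def)
lemma subsp_scale: "subsp V \<Longrightarrow> v \<in> V \<Longrightarrow> fscale c v \<in> V"
  by (simp add: subsp_def)
lemma subsp_zero: "subsp V \<Longrightarrow> 0 \<in> V"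
  by (simp add: subsp_def)
lemma subsp_diff: "subsp V \<Longrightarrow> u \<in> V \<Longrightarrow> v \<in> V \<Longrightarrow> u - v \<in> V"
proof -
  assume a: "subsp V" "u \<in> V" "v \<in> V"
  have "u - v = u + fscale (-1) v" by (auto simp: fun_eq_iff)
  then show ?thesis using a subsp_add subsp_scale by metis
qed

lemma subsp_lincomb:
  assumes V: "subsp V" and fin: "finite T" and f: "\<forall>t\<in>T. f t \<in> V"
  shows "(\<lambda>p. \<Sum>t\<in>T. g t * f t p) \<in> V"
  using fin f
proof (induction T rule: finite_induct)
  case empty
  have "(\<lambda>p. \<Sum>t\<in>{}. g t * f t p) = 0" by (simp add: func_zero)
  then show ?case using subsp_zero[OF V] by simp
next
  case (insert x F)
  have eq: "(\<lambda>p. \<Sum>t\<in>insert x F. g t * f t p) = fscale (g x) (f x) + (\<lambda>p. \<Sum>t\<in>F. g t * f t p)"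
    using insert(1,2) by (simp add: func_plus)
  have "fscale (g x) (f x) \<in> V" using subsp_scale[OF V] insert(4) by simp
  moreover have "(\<lambda>p. \<Sum>t\<in>F. g t * f t p) \<in> V" using insert(3,4) by simp
  ultimately show ?case unfolding eq by (rule subsp_add[OF V])
qed

definition sep :: "(nat \<times> nat \<Rightarrow> 'a::field) set \<Rightarrow> (nat \<times> nat) set \<Rightarrow> bool" where
  "sep V S \<longleftrightarrow> (\<forall>e\<in>S. \<exists>v\<in>V. v e = 1 \<and> (\<forall>e'\<in>S. e' \<noteq> e \<longrightarrow> v e' = 0))"

definition cindep :: "(nat \<times> nat \<Rightarrow> 'a::field) set \<Rightarrow> (nat \<times> nat) set \<Rightarrow> bool" where
  "cindep V S \<longleftrightarrow> (\<forall>a. (\<forall>v\<in>V. (\<Sum>e\<in>S. a e * v e) = 0) \<longrightarrow> (\<forall>e\<in>S. a e = 0))"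

lemma sep_mono: "sep V S \<Longrightarrow> T \<subseteq> S \<Longrightarrow> sep V T"
  unfolding sep_def by (meson subsetD)

lemma sep_dual:
  assumes "sep V S"
  obtains d where "\<forall>e\<in>S. d e \<in> V \<and> d e e = 1 \<and> (\<forall>e'\<in>S. e' \<noteq> e \<longrightarrow> d e e' = 0)"
proof -
  have "\<forall>e\<in>S. \<exists>v. v \<in> V \<and> v e = 1 \<and> (\<forall>e'\<in>S. e' \<noteq> e \<longrightarrow> v e' = 0)"
    using assms unfolding sep_def by blast
  then obtain d where "\<forall>e\<in>S. d e \<in> V \<and> d e e = 1 \<and> (\<forall>e'\<in>S. e' \<noteq> e \<longrightarrow> d e e' = 0)"
    by (rule bchoice[THEN exE]) blast
  then show ?thesis using that by blast
qed

lemma sep_extend: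
  assumes V: "subsp V" and s: "sep V B" and w: "w \<in> V" "\<forall>b\<in>B. w b = 0" "w e \<noteq> 0"
  shows "sep V (insert e B)"
proof -
  obtain d where d: "\<forall>b\<in>B. d b \<in> V \<and> d b b = 1 \<and> (\<forall>e'\<in>B. e' \<noteq> b \<longrightarrow> d b e' = 0)"
    using sep_dual[OF s] by blast
  define u where "u = fscale (1 / w e) w"
  have uV: "u \<in> V" using w(1) subsp_scale[OF V] by (simp add: u_def)
  have ue: "u e = 1" using w(3) by (simp add: u_def)
  have uB: "\<forall>b\<in>B. u b = 0" using w(2) by (simp add: u_def)
  have eB: "e \<notin> B" using w by blast
  show ?thesis
    unfolding sep_def
  proof
    fix x assume x: "x \<in> insert e B"
    show "\<exists>v\<in>V. v x = 1 \<and> (\<forall>e'\<in>insert e B. e' \<noteq> x \<longrightarrow> v e' = 0)"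
    proof (cases "x = e")
      case True
      then show ?thesis using uV ue uB by blast
    next
      case False
      then have xB: "x \<in> B" using x by blast
      define v where "v = d x - fscale (d x e) u"
      have dx: "d x \<in> V" "d x x = 1" "\<forall>e'\<in>B. e' \<noteq> x \<longrightarrow> d x e' = 0" using d xB by auto
      have "v \<in> V" unfolding v_def by (rule subsp_diff[OF V dx(1) subsp_scale[OF V uV]])
      moreover have "v x = 1" using dx(2) uB xB by (simp add: v_def)
      moreover have "\<forall>e'\<in>insert e B. e' \<noteq> x \<longrightarrow> v e' = 0"
      proof (intro ballI impI)
        fix e' assume "e' \<in> insert e B" "e' \<noteq> x"
        then show "v e' = 0" using dx(3) uB ue by (cases "e' = e") (auto simp: v_def)
      qed
      ultimately show ?thesis by blast
    qed
  qed
qed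

lemma sep_cindep:
  assumes "sep V S" "finite S"
  shows "cindep V S"
  unfolding cindep_def
proof (intro allI impI ballI)
  fix a e assume h: "\<forall>v\<in>V. (\<Sum>e\<in>S. a e * v e) = 0" and e: "e \<in> S"
  obtain d where d: "\<forall>e\<in>S. d e \<in> V \<and> d e e = 1 \<and> (\<forall>e'\<in>S. e' \<noteq> e \<longrightarrow> d e e' = 0)"
    using sep_dual[OF assms(1)] by blast
  have "(\<Sum>e'\<in>S. a e' * d e e') = a e * d e e + (\<Sum>e'\<in>S - {e}. a e' * d e e')"
    using e assms(2) by (simp add: sum.remove)
  also have "(\<Sum>e'\<in>S - {e}. a e' * d e e') = 0"
    using d e by (intro sum.neutral) auto
  finally show "a e = 0" using h d e by auto
qed

lemma cindep_sep:
  assumes V: "subsp V" and fin: "finite S"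
  shows "cindep V S \<Longrightarrow> sep V S"
  using fin
proof (induction S rule: finite_induct)
  case empty
  then show ?case by (simp add: sep_def)
next
  case (insert x T)
  have cT: "cindep V T"
    unfolding cindep_def
  proof (intro allI impI)
    fix a assume h: "\<forall>v\<in>V. (\<Sum>e\<in>T. a e * v e) = 0"
    let ?a = "\<lambda>e. if e = x then 0 else a e"
    have "\<forall>v\<in>V. (\<Sum>e\<in>insert x T. ?a e * v e) = 0"
    proof
      fix v assume "v \<in> V"
      have "(\<Sum>e\<in>insert x T. ?a e * v e) = (\<Sum>e\<in>T. ?a e * v e)" using insert by simp
      also have "\<dots> = (\<Sum>e\<in>T. a e * v e)" using insert by (intro sum.cong) auto
      finally show "(\<Sum>e\<in>insert x T. ?a e * v e) = 0" using h \<open>v \<in> V\<close> by simp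
    qed
    then have "\<forall>e\<in>insert x T. ?a e = 0" using insert.prems unfolding cindep_def by (elim allE[where x="?a"]) blast
    then show "\<forall>e\<in>T. a e = 0" using insert by (metis insertCI)
  qed
  then have sT: "sep V T" using insert by blast
  obtain d where d: "\<forall>e\<in>T. d e \<in> V \<and> d e e = 1 \<and> (\<forall>e'\<in>T. e' \<noteq> e \<longrightarrow> d e e' = 0)"
    using sep_dual[OF sT] by blast
  have "\<exists>w\<in>V. (\<forall>b\<in>T. w b = 0) \<and> w x \<noteq> 0"
  proof (rule ccontr)
    assume nex: "\<not> ?thesis"
    let ?a = "\<lambda>e. if e = x then 1 else - d e x"
    have "\<forall>v\<in>V. (\<Sum>e\<in>insert x T. ?a e * v e) = 0"
    proof
      fix v assume v: "v \<in> V"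
      let ?w = "v - (\<lambda>p. \<Sum>t\<in>T. v t * d t p)"
      have wV: "?w \<in> V" using subsp_diff[OF V v subsp_lincomb[OF V insert(1)]] d by auto
      have "\<forall>b\<in>T. ?w b = 0"
      proof
        fix b assume b: "b \<in> T"
        have "(\<Sum>t\<in>T. v t * d t b) = v b * d b b + (\<Sum>t\<in>T - {b}. v t * d t b)"
          using b insert(1) by (simp add: sum.remove)
        also have "(\<Sum>t\<in>T - {b}. v t * d t b) = 0" using d b by (intro sum.neutral) auto
        finally show "?w b = 0" using d b by simp
      qed
      then have "?w x = 0" using nex wV by blast
      then have vx: "v x = (\<Sum>t\<in>T. v t * d t x)" by simp
      have "(\<Sum>e\<in>insert x T. ?a e * v e) = v x + (\<Sum>e\<in>T. ?a e * v e)" using insert by simp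
      also have "(\<Sum>e\<in>T. ?a e * v e) = - (\<Sum>t\<in>T. v t * d t x)"
        using insert by (auto simp: sum_negf[symmetric] intro!: sum.cong)
      finally show "(\<Sum>e\<in>insert x T. ?a e * v e) = 0" using vx by simp
    qed
    then have "?a x = 0" using insert.prems unfolding cindep_def by (elim allE[where x="?a"]) blast
    then show False by simp
  qed
  then obtain w where "w \<in> V" "\<forall>b\<in>T. w b = 0" "w x \<noteq> 0" by blast
  then show ?case using sep_extend[OF V sT] by blast
qed


lemma coord_restr_in: "v \<in> V \<Longrightarrow> coord_restr V e v = v e"
  by (simp add: coord_restr_def)
lemma coord_restr_out: "v \<notin> V \<Longrightarrow> coord_restr V e v = 0"
  by (simp add: coord_restr_def)

lemma cindep_inj:
  assumes c: "cindep V S" and fin: "finite S"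
  shows "inj_on (coord_restr V) S"
proof (rule inj_onI, rule ccontr)
  fix e1 e2 assume e: "e1 \<in> S" "e2 \<in> S" "coord_restr V e1 = coord_restr V e2" "e1 \<noteq> e2"
  let ?a = "\<lambda>e. if e = e1 then 1 else if e = e2 then -1 else (0::'a)"
  have "\<forall>v\<in>V. (\<Sum>e\<in>S. ?a e * v e) = 0"
  proof
    fix v assume v: "v \<in> V"
    have "(\<Sum>e\<in>S. ?a e * v e) = ?a e1 * v e1 + (\<Sum>e\<in>S - {e1}. ?a e * v e)"
      using e fin by (simp add: sum.remove)
    also have "(\<Sum>e\<in>S - {e1}. ?a e * v e) = ?a e2 * v e2 + (\<Sum>e\<in>S - {e1} - {e2}. ?a e * v e)"
      using e fin by (subst sum.remove[of _ e2]) auto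
    also have "(\<Sum>e\<in>S - {e1} - {e2}. ?a e * v e) = 0" by (intro sum.neutral) auto
    finally have "(\<Sum>e\<in>S. ?a e * v e) = v e1 - v e2" using e by simp
    moreover have "v e1 = v e2" using e(3) coord_restr_in[OF v] by metis
    ultimately show "(\<Sum>e\<in>S. ?a e * v e) = 0" by simp
  qed
  then have "?a e1 = 0" using c e unfolding cindep_def by (elim allE[where x="?a"]) blast
  then show False by simp
qed

lemma mindep_iff_cindep:
  assumes fin: "finite S"
  shows "fdim (fv.span (coord_restr V ` S)) = card S \<longleftrightarrow> cindep V S"
proof -
  let ?phi = "coord_restr V"
  let ?A = "?phi ` S"
  have finA: "finite ?A" using fin by simp
  have dimA: "fdim (fv.span ?A) = fv.dim ?A" by (simp add: fdim_eq)
  show ?thesis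
  proof
    assume h: "fdim (fv.span ?A) = card S"
    have "fv.dim ?A \<le> card ?A" by (rule fv.dim_le_card'[OF finA])
    moreover have "card ?A \<le> card S" by (rule card_image_le[OF fin])
    ultimately have cA: "card ?A = card S" "fv.dim ?A = card ?A" using h dimA by linarith+
    then have inj: "inj_on ?phi S" using fin by (simp add: inj_on_iff_eq_card)
    obtain B where B: "B \<subseteq> ?A" "fv.independent B" "?A \<subseteq> fv.span B" "card B = fv.dim ?A"
      using fv.basis_exists by blast
    have "B = ?A" using B(1,4) cA finA by (metis card_subset_eq)
    then have indA: "fv.independent ?A" using B(2) by simp
    show "cindep V S"
      unfolding cindep_def
    proof (intro allI impI ballI)
      fix a e assume H: "\<forall>v\<in>V. (\<Sum>e\<in>S. a e * v e) = 0" and e: "e \<in> S"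
      define u where "u = (\<lambda>x. a (the_inv_into S ?phi x))"
      have u_phi: "u (?phi e') = a e'" if "e' \<in> S" for e'
        using that inj by (simp add: u_def the_inv_into_f_f)
      have Z: "(\<Sum>x\<in>?A. fscale (u x) x) = 0"
      proof
        fix w
        have "(\<Sum>x\<in>?A. fscale (u x) x) w = (\<Sum>x\<in>?A. u x * x w)"
          by (simp add: sum_fun_apply)
        also have "\<dots> = (\<Sum>e\<in>S. u (?phi e) * ?phi e w)"
          by (rule sum.reindex[OF inj, unfolded comp_def])
        also have "\<dots> = (\<Sum>e\<in>S. a e * ?phi e w)"
          by (rule sum.cong) (simp_all add: u_phi)
        also have "\<dots> = 0"
        proof (cases "w \<in> V")
          case True
          then show ?thesis using H by (simp add: coord_restr_in)
        next
          case False
          then show ?thesis by (simp add: coord_restr_out)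
        qed
        finally show "(\<Sum>x\<in>?A. fscale (u x) x) w = 0 w" by (simp add: func_zero)
      qed
      have "u x = 0" if "x \<in> ?A" for x
        by (rule indA[unfolded fv.independent_explicit_finite_subsets, rule_format, OF order_refl finA Z that])
      then show "a e = 0" using e u_phi by (metis imageI)
    qed
  next
    assume c: "cindep V S"
    have inj: "inj_on ?phi S" by (rule cindep_inj[OF c fin])
    have nd: "\<not> (\<exists>f. (\<exists>x\<in>?A. f x \<noteq> 0) \<and> (\<Sum>x\<in>?A. fscale (f x) x) = 0)"
    proof
      assume "\<exists>f. (\<exists>x\<in>?A. f x \<noteq> 0) \<and> (\<Sum>x\<in>?A. fscale (f x) x) = 0"
      then obtain f x where x: "x \<in> ?A" "f x \<noteq> 0" and s0: "(\<Sum>x\<in>?A. fscale (f x) x) = 0"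
        by blast
      have "\<forall>v\<in>V. (\<Sum>e\<in>S. f (?phi e) * v e) = 0"
      proof
        fix v assume v: "v \<in> V"
        have "0 = (\<Sum>x\<in>?A. fscale (f x) x) v" using s0 by (simp add: func_zero)
        also have "\<dots> = (\<Sum>x\<in>?A. f x * x v)" by (simp add: sum_fun_apply)
        also have "\<dots> = (\<Sum>e\<in>S. f (?phi e) * ?phi e v)"
          by (rule sum.reindex[OF inj, unfolded comp_def])
        also have "\<dots> = (\<Sum>e\<in>S. f (?phi e) * v e)" using v by (simp add: coord_restr_in)
        finally show "(\<Sum>e\<in>S. f (?phi e) * v e) = 0" by simp
      qed
      moreover have "(\<forall>v\<in>V. (\<Sum>e\<in>S. f (?phi e) * v e) = 0) \<longrightarrow> (\<forall>e\<in>S. f (?phi e) = 0)"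
        using c unfolding cindep_def by (rule spec[where x="\<lambda>e. f (?phi e)"])
      ultimately have all0: "\<forall>e\<in>S. f (?phi e) = 0" by blast
      obtain e where e: "x = ?phi e" "e \<in> S" using x(1) by (rule imageE)
      have f0: "f (?phi e) = 0" using all0 e(2) by blast
      then show False using e(1) x(2) by simp
    qed
    have indA: "fv.independent ?A"
      using nd fv.dependent_finite[OF finA] by simp
    have "fv.dim ?A = card ?A" by (rule fv.dim_eq_card_independent[OF indA])
    also have "\<dots> = card S" using inj by (simp add: card_image)
    finally show "fdim (fv.span ?A) = card S" using dimA by simp
  qed
qed


lemma m_indep_iff:
  assumes finE: "finite E" and W: "subsp (direction K)"
  shows "m_indep E K S \<longleftrightarrow> S \<subseteq> E \<and> sep (direction K) S"
proof (cases "S \<subseteq> E")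
  case True
  then have finS: "finite S" using finE finite_subset by blast
  have "m_indep E K S \<longleftrightarrow> cindep (direction K) S"
    using True mindep_iff_cindep[OF finS, of "direction K"] by (simp add: m_indep_def mrank_def)
  also have "\<dots> \<longleftrightarrow> sep (direction K) S"
    using cindep_sep[OF W finS] sep_cindep[OF _ finS] by blast
  finally show ?thesis using True by simp
next
  case False
  then show ?thesis by (simp add: m_indep_def)
qed

lemma basis_sep:
  assumes finE: "finite E" and W: "subsp (direction K)" and B: "m_basis E K B"
  shows "B \<subseteq> E" "sep (direction K) B"
  using B m_indep_iff[OF finE W] by (auto simp: m_basis_def)

lemma basis_spanning:
  assumes finE: "finite E" and W: "subsp (direction K)" and supp: "direction K \<subseteq> supp_on E"
    and B: "m_basis E K B" and v: "v \<in> direction K" "\<forall>b\<in>B. v b = 0"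
  shows "v = 0"
proof (rule ccontr)
  assume "v \<noteq> 0"
  then obtain e where e: "v e \<noteq> 0" by (auto simp: fun_eq_iff)
  have eE: "e \<in> E"
  proof (rule ccontr)
    assume "e \<notin> E"
    moreover have "v \<in> supp_on E" using v(1) supp by blast
    ultimately have "v e = 0" unfolding supp_on_def by blast
    then show False using e by simp
  qed
  have BE: "B \<subseteq> E" and sB: "sep (direction K) B" using basis_sep[OF finE W B] by auto
  have eB: "e \<notin> B" using e v(2) by blast
  have "sep (direction K) (insert e B)" by (rule sep_extend[OF W sB v e])
  then have "m_indep E K (insert e B)" using m_indep_iff[OF finE W] eE BE by auto
  moreover have "B \<subset> insert e B" "insert e B \<subseteq> E" using eB eE BE by auto
  ultimately show False using B unfolding m_basis_def by blast
qed

lemma coindep_from_spanning: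
  assumes finE: "finite E" and W: "subsp (direction K)" and supp: "direction K \<subseteq> supp_on E"
    and CE: "C \<subseteq> E"
    and span: "\<forall>v\<in>direction K. (\<forall>d\<in>E - C. v d = 0) \<longrightarrow> v = 0"
  shows "m_coindep E K C"
proof -
  let ?W = "direction K"
  let ?D = "E - C"
  let ?F = "{T. T \<subseteq> ?D \<and> sep ?W T}"
  have finF: "finite ?F" using finE by (auto intro: finite_subset[of _ "Pow ?D"])
  have "{} \<in> ?F" by (simp add: sep_def)
  then have neF: "card ` ?F \<noteq> {}" by blast
  define m where "m = Max (card ` ?F)"
  have "m \<in> card ` ?F" unfolding m_def using finF neF by (intro Max_in) auto
  then obtain B2 where B2: "B2 \<subseteq> ?D" "sep ?W B2" "card B2 = m" by blast
  have maxc: "card T \<le> m" if "T \<in> ?F" for T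
    unfolding m_def using finF that by (intro Max_ge) auto
  have finD: "finite ?D" using finE by simp
  have claim: "u d = 0" if u: "u \<in> ?W" "\<forall>b\<in>B2. u b = 0" and d: "d \<in> ?D" for u d
  proof (rule ccontr)
    assume ud: "u d \<noteq> 0"
    have dB: "d \<notin> B2" using ud u(2) by blast
    have "sep ?W (insert d B2)" by (rule sep_extend[OF W B2(2) u ud])
    then have "insert d B2 \<in> ?F" using B2(1) d by auto
    then have "card (insert d B2) \<le> m" by (rule maxc)
    moreover have "finite B2" using B2(1) finD finite_subset by blast
    ultimately show False using dB B2(3) by simp
  qed
  have B2E: "B2 \<subseteq> E" using B2(1) by blast
  have mi: "m_indep E K B2" using m_indep_iff[OF finE W] B2E B2(2) by auto
  have "m_basis E K B2"
    unfolding m_basis_def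
  proof (intro conjI mi allI impI notI)
    fix S assume S: "B2 \<subset> S \<and> S \<subseteq> E" and Si: "m_indep E K S"
    have sS: "sep ?W S" using Si m_indep_iff[OF finE W] by auto
    obtain e where e: "e \<in> S" "e \<notin> B2" using S by blast
    obtain u where u: "u \<in> ?W" "u e = 1" "\<forall>e'\<in>S. e' \<noteq> e \<longrightarrow> u e' = 0"
      using sS e(1) unfolding sep_def by blast
    have uB: "\<forall>b\<in>B2. u b = 0"
    proof
      fix b assume b: "b \<in> B2"
      then have "b \<in> S" "b \<noteq> e" using S e(2) by auto
      then show "u b = 0" using u(3) by simp
    qed
    have "\<forall>d\<in>?D. u d = 0" using claim[OF u(1) uB] by blast
    then have "u = 0" using span u(1) by blast
    then show False using u(2) by simp
  qed
  then have "m_cobasis E K (E - B2)" unfolding m_cobasis_def by blast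
  moreover have "C \<subseteq> E - B2" using CE B2(1) by blast
  ultimately show ?thesis unfolding m_coindep_def by blast
qed

lemma direction_shift:
  assumes W: "subsp V"
  shows "direction ((\<lambda>v. s + v) ` V) = V"
proof
  show "direction ((\<lambda>v. s + v) ` V) \<subseteq> V"
  proof
    fix x assume "x \<in> direction ((\<lambda>v. s + v) ` V)"
    then obtain a b where ab: "x = (s + a) - (s + b)" "a \<in> V" "b \<in> V"
      unfolding direction_def by blast
    have "x = a - b" using ab(1) by simp
    then show "x \<in> V" using subsp_diff[OF W ab(2,3)] by simp
  qed
next
  show "V \<subseteq> direction ((\<lambda>v. s + v) ` V)"
  proof
    fix x assume x: "x \<in> V"
    have "x = (s + x) - (s + 0)" by simp
    moreover have "s + x \<in> (\<lambda>v. s + v) ` V" "s + 0 \<in> (\<lambda>v. s + v) ` V"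
      using x subsp_zero[OF W] by blast+
    ultimately show "x \<in> direction ((\<lambda>v. s + v) ` V)" unfolding direction_def by blast
  qed
qed

lemma lv_direction:
  assumes "linear_variety E K"
  obtains s where "s \<in> supp_on E" "lin_subspace E (direction K)" "K = (\<lambda>v. s + v) ` direction K"
proof -
  obtain s V where sV: "s \<in> supp_on E" "lin_subspace E V" "K = (\<lambda>v. s + v) ` V"
    using assms unfolding linear_variety_def by blast
  have "direction K = V" using sV(3) direction_shift[OF lin_subspace_subsp[OF sV(2)]] by simp
  then show ?thesis using that sV by simp
qed


lemma supp_onD: "f \<in> supp_on E \<Longrightarrow> x \<notin> E \<Longrightarrow> f x = 0"
  unfolding supp_on_def by blast

lemma supp_onI: "(\<And>x. x \<notin> E \<Longrightarrow> f x = 0) \<Longrightarrow> f \<in> supp_on E"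
  unfolding supp_on_def by blast

lemma lincomb_in_span:
  assumes "finite B"
  shows "(\<lambda>p. \<Sum>b\<in>B. g b * d b p) \<in> fv.span (d ` B)"
proof -
  have eq: "(\<lambda>p. \<Sum>b\<in>B. g b * d b p) = (\<Sum>b\<in>B. fscale (g b) (d b))"
    by (simp add: fun_eq_iff sum_fun_apply)
  show ?thesis unfolding eq
    by (intro fv.span_sum fv.span_scale fv.span_base) auto
qed

lemma dim_upper:
  assumes finB: "finite B" and span: "\<forall>v\<in>W. v = (\<lambda>p. \<Sum>b\<in>B. v b * d b p)"
  shows "fdim W \<le> card B"
proof -
  have "W \<subseteq> fv.span (d ` B)"
  proof
    fix v assume "v \<in> W"
    then have "v = (\<lambda>p. \<Sum>b\<in>B. v b * d b p)" using span by blast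
    also have "\<dots> \<in> fv.span (d ` B)" by (rule lincomb_in_span[OF finB])
    finally show "v \<in> fv.span (d ` B)" .
  qed
  then have "fv.dim W \<le> card (d ` B)" using finB by (intro fv.dim_le_card) auto
  also have "\<dots> \<le> card B" using finB by (rule card_image_le)
  finally show ?thesis by (simp add: fdim_eq)
qed

definition unitf :: "nat \<times> nat \<Rightarrow> nat \<times> nat \<Rightarrow> 'a::field" where
  "unitf e = (\<lambda>p. if p = e then 1 else 0)"

lemma supp_on_span:
  assumes finE: "finite E"
  shows "supp_on E \<subseteq> fv.span (unitf ` E :: (nat \<times> nat \<Rightarrow> 'a::field) set)"
proof
  fix f :: "nat \<times> nat \<Rightarrow> 'a" assume f: "f \<in> supp_on E"
  have "f = (\<lambda>p. \<Sum>e\<in>E. f e * unitf e p)"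
  proof
    fix p
    show "f p = (\<Sum>e\<in>E. f e * unitf e p)"
    proof (cases "p \<in> E")
      case True
      have "(\<Sum>e\<in>E. f e * unitf e p) = f p * unitf p p + (\<Sum>e\<in>E - {p}. f e * unitf e p)"
        using True finE by (simp add: sum.remove)
      also have "(\<Sum>e\<in>E - {p}. f e * unitf e p) = 0"
        by (intro sum.neutral) (auto simp: unitf_def)
      finally show ?thesis by (simp add: unitf_def)
    next
      case False
      then have "f p = 0" using f by (rule supp_onD[rotated])
      moreover have "(\<Sum>e\<in>E. f e * unitf e p) = 0"
        using False by (intro sum.neutral) (auto simp: unitf_def)
      ultimately show ?thesis by simp
    qed
  qed
  also have "\<dots> \<in> fv.span (unitf ` E)" by (rule lincomb_in_span[OF finE])
  finally show "f \<in> fv.span (unitf ` E)" .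
qed

lemma dim_lower:
  assumes finE: "finite E" and WE: "W \<subseteq> supp_on E" and finP: "finite P"
    and fW: "\<forall>p\<in>P. f p \<in> W"
    and fq: "\<forall>p\<in>P. \<forall>p'\<in>P. f p (q p') = (if p = p' then 1 else 0)"
  shows "card P \<le> fdim W"
proof -
  let ?I = "f ` P"
  have inj: "inj_on f P"
  proof (rule inj_onI)
    fix p p' assume p: "p \<in> P" "p' \<in> P" "f p = f p'"
    have "f p (q p) = 1" using fq p(1) by simp
    moreover have "f p' (q p) = (if p' = p then 1 else 0)" using fq p(1,2) by blast
    ultimately show "p = p'" using p(3) by (metis zero_neq_one)
  qed
  have finI: "finite ?I" using finP by simp
  have nd: "\<not> (\<exists>u. (\<exists>x\<in>?I. u x \<noteq> 0) \<and> (\<Sum>x\<in>?I. fscale (u x) x) = 0)"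
  proof
    assume "\<exists>u. (\<exists>x\<in>?I. u x \<noteq> 0) \<and> (\<Sum>x\<in>?I. fscale (u x) x) = 0"
    then obtain u x where x: "x \<in> ?I" "u x \<noteq> 0" and s0: "(\<Sum>x\<in>?I. fscale (u x) x) = 0"
      by blast
    obtain p where p: "x = f p" "p \<in> P" using x(1) by (rule imageE)
    have "0 = (\<Sum>x\<in>?I. fscale (u x) x) (q p)" using s0 by (simp add: func_zero)
    also have "\<dots> = (\<Sum>x\<in>?I. u x * x (q p))" by (simp add: sum_fun_apply)
    also have "\<dots> = (\<Sum>p'\<in>P. u (f p') * f p' (q p))"
      by (rule sum.reindex[OF inj, unfolded comp_def])
    also have "\<dots> = u (f p) * f p (q p) + (\<Sum>p'\<in>P - {p}. u (f p') * f p' (q p))"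
      using p(2) finP by (simp add: sum.remove)
    also have "(\<Sum>p'\<in>P - {p}. u (f p') * f p' (q p)) = 0"
      using fq p(2) by (intro sum.neutral) auto
    also have "f p (q p) = 1" using fq p(2) by simp
    finally have "u (f p) = 0" by simp
    then show False using p(1) x(2) by simp
  qed
  have indI: "fv.independent ?I" using nd fv.dependent_finite[OF finI] by simp
  have IW: "?I \<subseteq> W" using fW by blast
  obtain A where A: "?I \<subseteq> A" "A \<subseteq> W" "fv.independent A" "W \<subseteq> fv.span A"
    using fv.maximal_independent_subset_extend[OF IW indI] by blast
  have "A \<subseteq> fv.span (unitf ` E)" using A(2) WE supp_on_span[OF finE] by blast
  then have finA: "finite A" using fv.independent_span_bound[OF _ A(3)] finE by blast
  have "card P = card ?I" using inj by (simp add: card_image)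
  also have "\<dots> \<le> card A" using A(1) finA by (rule card_mono[rotated])
  also have "\<dots> = fv.dim W" using fv.basis_card_eq_dim[OF A(2,4,3)] .
  finally show ?thesis by (simp add: fdim_eq)
qed


lemma iota_simp: "iota i' j' (a, b) = (if a \<ge> i' then a + 1 else a, if b \<ge> j' then b + 1 else b)"
  by (simp add: iota_def)

lemma iota_inj: "inj (iota i' j')"
proof (rule injI)
  fix p q assume h: "iota i' j' p = iota i' j' q"
  obtain a b where p: "p = (a, b)" by fastforce
  obtain a' b' where q: "q = (a', b')" by fastforce
  from h show "p = q" unfolding p q iota_simp
    by (auto split: if_splits)
qed

lemma idx_mem: "(a, b) \<in> idx n k \<longleftrightarrow> 1 \<le> a \<and> a \<le> n \<and> 1 \<le> b \<and> b \<le> k"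
  by (auto simp: idx_def)

lemma iota_in:
  assumes "p \<in> idx (n - 1) (k - 1)" "i' \<in> {1..n}" "j' \<in> {1..k}"
  shows "iota i' j' p \<in> idx n k" "fst (iota i' j' p) \<noteq> i'" "snd (iota i' j' p) \<noteq> j'"
proof -
  obtain a b where p: "p = (a, b)" by fastforce
  show "iota i' j' p \<in> idx n k" "fst (iota i' j' p) \<noteq> i'" "snd (iota i' j' p) \<noteq> j'"
    using assms unfolding p iota_simp idx_mem by auto
qed

lemma iota_onto:
  assumes "q \<in> idx n k" "fst q \<noteq> i'" "snd q \<noteq> j'" "i' \<in> {1..n}" "j' \<in> {1..k}"
  shows "\<exists>p\<in>idx (n - 1) (k - 1). iota i' j' p = q"
proof -
  obtain a b where q: "q = (a, b)" by fastforce
  let ?p = "(if a > i' then a - 1 else a, if b > j' then b - 1 else b)"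
  have "?p \<in> idx (n - 1) (k - 1)" using assms unfolding q idx_mem by auto
  moreover have "iota i' j' ?p = q" using assms unfolding q iota_simp by auto
  ultimately show ?thesis by blast
qed

lemma del_in: "p \<in> idx (n - 1) (k - 1) \<Longrightarrow> delete_rc n k i' j' X p = X (iota i' j' p)"
  by (simp add: delete_rc_def)
lemma del_out: "p \<notin> idx (n - 1) (k - 1) \<Longrightarrow> delete_rc n k i' j' X p = 0"
  by (simp add: delete_rc_def)
lemma del_supp: "delete_rc n k i' j' X \<in> supp_on (idx (n - 1) (k - 1))"
  by (rule supp_onI) (simp add: delete_rc_def)
lemma del_add: "delete_rc n k i' j' (X + Y :: nat \<times> nat \<Rightarrow> 'a::field) = delete_rc n k i' j' X + delete_rc n k i' j' Y"
  by (simp add: delete_rc_def fun_eq_iff)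
lemma del_scale: "delete_rc n k i' j' (fscale c X :: nat \<times> nat \<Rightarrow> 'a::field) = fscale c (delete_rc n k i' j' X)"
  by (simp add: delete_rc_def fun_eq_iff)
lemma del_zero: "delete_rc n k i' j' (0 :: nat \<times> nat \<Rightarrow> 'a::field) = 0"
  by (simp add: delete_rc_def fun_eq_iff)
lemma del_diff: "delete_rc n k i' j' (X - Y :: nat \<times> nat \<Rightarrow> 'a::field) = delete_rc n k i' j' X - delete_rc n k i' j' Y"
  by (simp add: delete_rc_def fun_eq_iff)


lemma card_idx: "card (idx n k) = n * k"
  by (simp add: idx_def card_cartesian_product)

lemma finite_idx: "finite (idx n k)"
  by (simp add: idx_def)

theorem parts_abc:
  fixes K :: "(nat \<times> nat \<Rightarrow> 'a::field) set"
    and n k i' j' :: nat and Bs :: "(nat \<times> nat) set" and c :: "nat \<Rightarrow> 'a"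
  assumes k1: "k > 1" and nk: "n \<ge> k"
    and lv: "linear_variety (idx n k) K"
    and cob: "m_cobasis (idx n k) K Bs"
    and j: "j' \<in> {1..k}" and Bcol: "Bs \<inter> ({1..n} \<times> {j'}) = {}"
    and i: "i' \<in> {1..n}"
    and K'def: "K' = {delete_rc n k i' j' X |X. X \<in> K \<and> (\<forall>i\<in>{1..n}. X (i, j') = c i)}"
  shows "linear_variety (idx (n - 1) (k - 1)) K'
    \<and> codim (idx (n - 1) (k - 1)) K' + card (Bs \<inter> ({i'} \<times> {1..k})) \<le> codim (idx n k) K
    \<and> (\<forall>Bs'. m_cobasis (idx (n - 1) (k - 1)) K' Bs' \<longrightarrow>
          m_coindep (idx n k) K ((Bs \<inter> ({i'} \<times> {1..k})) \<union> iota i' j' ` Bs'))"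
proof -
  define E where "E = idx n k"
  define E' where "E' = idx (n - 1) (k - 1)"
  define W where "W = direction K"
  have finE: "finite E" and finE': "finite E'" by (simp_all add: E_def E'_def finite_idx)
  obtain s where s: "s \<in> supp_on E" "lin_subspace E W" "K = (\<lambda>v. s + v) ` W"
    using lv_direction[OF lv] unfolding W_def E_def by blast
  have Wsub: "subsp W" by (rule lin_subspace_subsp[OF s(2)])
  have WE: "W \<subseteq> supp_on E" using s(2) by (simp add: lin_subspace_def)
  obtain B where B: "m_basis E K B" "Bs = E - B" using cob by (auto simp: m_cobasis_def E_def)
  have BE: "B \<subseteq> E" and sB: "sep W B"
    using basis_sep[OF finE _ B(1)] Wsub unfolding W_def by auto
  have finB: "finite B" using BE finE finite_subset by blast
  obtain d where d: "\<forall>b\<in>B. d b \<in> W \<and> d b b = 1 \<and> (\<forall>e'\<in>B. e' \<noteq> b \<longrightarrow> d b e' = 0)"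
    using sep_dual[OF sB] by blast
  define col where "col = {1..n} \<times> {j'}"
  have colE: "col \<subseteq> E" using j unfolding col_def E_def idx_def by auto
  have colB: "col \<subseteq> B" using Bcol B(2) colE unfolding col_def by blast
  have spanB: "v = 0" if "v \<in> W" "\<forall>b\<in>B. v b = 0" for v
    using basis_spanning[OF finE _ _ B(1)] Wsub WE that unfolding W_def by blast
  have lincomb_d: "(\<lambda>p. \<Sum>b\<in>T. g b * d b p) \<in> W" if "T \<subseteq> B" for g T
  proof -
    have "finite T" using that finB finite_subset by blast
    moreover have "\<forall>t\<in>T. d t \<in> W" using that d by blast
    ultimately show ?thesis by (rule subsp_lincomb[OF Wsub])
  qed
  have eval_d: "(\<Sum>b\<in>T. g b * d b e) = g e" if "T \<subseteq> B" "e \<in> T" for g T e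
  proof -
    have fT: "finite T" using that finB finite_subset by blast
    have "(\<Sum>b\<in>T. g b * d b e) = g e * d e e + (\<Sum>b\<in>T - {e}. g b * d b e)"
      using that fT by (simp add: sum.remove)
    also have "(\<Sum>b\<in>T - {e}. g b * d b e) = 0"
    proof (rule sum.neutral, rule ballI)
      fix b assume "b \<in> T - {e}"
      then have "b \<in> B" "e \<in> B" "e \<noteq> b" using that by auto
      then show "g b * d b e = 0" using d by simp
    qed
    also have "d e e = 1" using d that by blast
    finally show ?thesis by simp
  qed
  have expand: "v = (\<lambda>p. \<Sum>b\<in>B. v b * d b p)" if v: "v \<in> W" for v
  proof -
    let ?w = "v - (\<lambda>p. \<Sum>b\<in>B. v b * d b p)"
    have "?w \<in> W" by (rule subsp_diff[OF Wsub v lincomb_d[OF order_refl]])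
    moreover have "\<forall>b\<in>B. ?w b = 0" using eval_d[OF order_refl] by simp
    ultimately have "?w = 0" by (rule spanB)
    then show ?thesis by simp
  qed
  define del where "del = (delete_rc n k i' j' :: (nat \<times> nat \<Rightarrow> 'a) \<Rightarrow> _)"
  define io where "io = iota i' j'"
  have io_inj: "inj io" unfolding io_def by (rule iota_inj)
  have ioE: "io p \<in> E" "fst (io p) \<noteq> i'" "snd (io p) \<noteq> j'" if "p \<in> E'" for p
    using iota_in[OF _ i j] that unfolding io_def E_def E'_def by auto
  have io_onto: "\<exists>p\<in>E'. io p = q" if "q \<in> E" "fst q \<noteq> i'" "snd q \<noteq> j'" for q
    using iota_onto[OF _ _ _ i j] that unfolding io_def E_def E'_def by auto
  have del_in': "del X p = X (io p)" if "p \<in> E'" for X p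
    using that unfolding del_def io_def E'_def by (rule del_in)
  define W0 where "W0 = {v\<in>W. \<forall>i\<in>{1..n}. v (i, j') = 0}"
  define W' where "W' = del ` W0"
  define v0 where "v0 = (\<lambda>p. \<Sum>b\<in>col. (c (fst b) - s b) * d b p)"
  have v0W: "v0 \<in> W" unfolding v0_def by (rule lincomb_d[OF colB])
  have v0col: "v0 (i, j') = c i - s (i, j')" if "i \<in> {1..n}" for i
  proof -
    have "(i, j') \<in> col" using that by (simp add: col_def)
    then show ?thesis unfolding v0_def using eval_d[OF colB, of "(i, j')"] by simp
  qed
  define X0 where "X0 = s + v0"
  have W0sub: "subsp W0"
    unfolding subsp_def W0_def using subsp_zero[OF Wsub] subsp_add[OF Wsub] subsp_scale[OF Wsub]
    by auto
  have K'eq: "K' = (\<lambda>v. del X0 + v) ` W'"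
  proof
    show "K' \<subseteq> (\<lambda>v. del X0 + v) ` W'"
    proof
      fix x assume "x \<in> K'"
      then obtain X where X: "x = del X" "X \<in> K" "\<forall>i\<in>{1..n}. X (i, j') = c i"
        unfolding K'def del_def by blast
      obtain w where w: "w \<in> W" "X = s + w" using X(2) s(3) by blast
      define w0 where "w0 = w - v0"
      have "w0 \<in> W" unfolding w0_def by (rule subsp_diff[OF Wsub w(1) v0W])
      moreover have "\<forall>i\<in>{1..n}. w0 (i, j') = 0"
      proof
        fix i assume i: "i \<in> {1..n}"
        have "X (i, j') = s (i, j') + w (i, j')" using w(2) by simp
        then show "w0 (i, j') = 0" using X(3) i v0col[OF i] by (simp add: w0_def)
      qed
      ultimately have w0W0: "w0 \<in> W0" by (simp add: W0_def)
      have "X = X0 + w0" using w(2) by (simp add: X0_def w0_def)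
      then have "x = del X0 + del w0" using X(1) by (simp add: del_def del_add)
      then show "x \<in> (\<lambda>v. del X0 + v) ` W'" using w0W0 by (simp add: W'_def)
    qed
  next
    show "(\<lambda>v. del X0 + v) ` W' \<subseteq> K'"
    proof
      fix x assume "x \<in> (\<lambda>v. del X0 + v) ` W'"
      then obtain w0 where w0: "w0 \<in> W0" "x = del X0 + del w0" by (auto simp: W'_def)
      have "v0 + w0 \<in> W" using subsp_add[OF Wsub v0W] w0(1) by (simp add: W0_def)
      then have XK: "X0 + w0 \<in> K" using s(3) by (simp add: X0_def add.assoc)
      have "\<forall>i\<in>{1..n}. (X0 + w0) (i, j') = c i"
        using v0col w0(1) by (simp add: X0_def W0_def)
      moreover have "x = del (X0 + w0)" using w0(2) by (simp add: del_def del_add)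
      ultimately show "x \<in> K'" using XK unfolding K'def del_def by blast
    qed
  qed
  have W'sub: "subsp W'"
    unfolding subsp_def
  proof (intro conjI ballI allI)
    show "0 \<in> W'" using subsp_zero[OF W0sub] del_zero unfolding W'_def del_def by (metis image_eqI)
  next
    fix u v assume "u \<in> W'" "v \<in> W'"
    then obtain u0 v0 where "u0 \<in> W0" "v0 \<in> W0" "u = del u0" "v = del v0" by (auto simp: W'_def)
    then show "u + v \<in> W'" using subsp_add[OF W0sub] unfolding W'_def del_def
      by (metis del_add image_eqI)
  next
    fix a v assume "v \<in> W'"
    then obtain v0 where "v0 \<in> W0" "v = del v0" by (auto simp: W'_def)
    then show "fscale a v \<in> W'" using subsp_scale[OF W0sub] unfolding W'_def del_def
      by (metis del_scale image_eqI)
  qed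
  have W'E': "W' \<subseteq> supp_on E'" unfolding W'_def del_def E'_def using del_supp by blast
  have lsW': "lin_subspace E' W'"
    using W'sub W'E' by (simp add: lin_subspace_def subsp_def)
  have X0E': "del X0 \<in> supp_on E'" unfolding del_def E'_def by (rule del_supp)
  have partA: "linear_variety E' K'"
    unfolding linear_variety_def using X0E' lsW' K'eq by blast
  have dirK': "direction K' = W'" using K'eq direction_shift[OF W'sub] by simp
  have dimW: "fdim W \<le> card B" by (rule dim_upper[OF finB, of W d]) (use expand in blast)
  define P where "P = {p\<in>E'. io p \<in> B}"
  have finP: "finite P" using finE' by (simp add: P_def)
  have fW': "\<forall>p\<in>P. del (d (io p)) \<in> W'"
  proof
    fix p assume p: "p \<in> P"
    then have pE: "p \<in> E'" and pB: "io p \<in> B" by (auto simp: P_def)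
    have "d (io p) \<in> W" using d pB by blast
    moreover have "\<forall>i\<in>{1..n}. d (io p) (i, j') = 0"
    proof
      fix i assume "i \<in> {1..n}"
      then have "(i, j') \<in> B" using colB by (auto simp: col_def)
      moreover have "(i, j') \<noteq> io p" using ioE(3)[OF pE] by (metis snd_conv)
      ultimately show "d (io p) (i, j') = 0" using d pB by blast
    qed
    ultimately show "del (d (io p)) \<in> W'" by (auto simp: W'_def W0_def)
  qed
  have fq: "\<forall>p\<in>P. \<forall>p'\<in>P. del (d (io p)) (id p') = (if p = p' then 1 else 0)"
  proof (intro ballI)
    fix p p' assume p: "p \<in> P" "p' \<in> P"
    then have pE: "p' \<in> E'" and pB: "io p \<in> B" "io p' \<in> B" by (auto simp: P_def)
    have "del (d (io p)) (id p') = d (io p) (io p')" using del_in'[OF pE] by simp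
    also have "\<dots> = (if p = p' then 1 else 0)"
    proof (cases "p = p'")
      case True
      then show ?thesis using d pB by simp
    next
      case False
      then have "io p' \<noteq> io p" using io_inj by (auto dest: injD)
      then show ?thesis using d pB False by simp
    qed
    finally show "del (d (io p)) (id p') = (if p = p' then 1 else 0)" .
  qed
  have dimW': "card P \<le> fdim W'" by (rule dim_lower[OF finE' W'E' finP fW' fq])
  define R where "R = {i'} \<times> ({1..k} - {j'})"
  have Bsplit: "B = col \<union> (B \<inter> R) \<union> io ` P"
  proof
    show "B \<subseteq> col \<union> (B \<inter> R) \<union> io ` P"
    proof
      fix b assume b: "b \<in> B"
      obtain a1 a2 where ab: "b = (a1, a2)" by fastforce
      have bE: "b \<in> E" using b BE by blast
      then have rng: "1 \<le> a1" "a1 \<le> n" "1 \<le> a2" "a2 \<le> k" unfolding ab E_def idx_mem by auto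
      show "b \<in> col \<union> (B \<inter> R) \<union> io ` P"
      proof (cases "a2 = j'")
        case True
        then show ?thesis using rng unfolding ab col_def by auto
      next
        case False
        show ?thesis
        proof (cases "a1 = i'")
          case True
          then show ?thesis using rng False b unfolding ab R_def by auto
        next
          case F2: False
          obtain p where p: "p \<in> E'" "io p = b" using io_onto[OF bE] F2 False unfolding ab by auto
          then have "p \<in> P" using b by (simp add: P_def)
          then show ?thesis using p(2) by blast
        qed
      qed
    qed
  next
    show "col \<union> (B \<inter> R) \<union> io ` P \<subseteq> B" using colB by (auto simp: P_def)
  qed
  have d1: "col \<inter> (B \<inter> R) = {}" unfolding col_def R_def by auto
  have d2: "(col \<union> (B \<inter> R)) \<inter> io ` P = {}"
  proof -
    have "\<forall>p\<in>P. io p \<notin> col \<and> io p \<notin> R"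
    proof
      fix p assume "p \<in> P"
      then have "p \<in> E'" by (simp add: P_def)
      then have "fst (io p) \<noteq> i'" "snd (io p) \<noteq> j'" using ioE by auto
      then show "io p \<notin> col \<and> io p \<notin> R" unfolding col_def R_def by auto
    qed
    then show ?thesis by blast
  qed
  have fincol: "finite col" by (simp add: col_def)
  have finR: "finite R" by (simp add: R_def)
  have cardcol: "card col = n" by (simp add: col_def card_cartesian_product)
  have cardR: "card R = k - 1" using j by (simp add: R_def card_cartesian_product)
  have cardB: "card B = n + card (B \<inter> R) + card P"
  proof -
    have "card B = card (col \<union> (B \<inter> R)) + card (io ` P)"
      using Bsplit d2 fincol finR finP by (metis card_Un_disjoint finite_Int finite_UnI finite_imageI)
    also have "card (col \<union> (B \<inter> R)) = card col + card (B \<inter> R)"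
      using d1 fincol finR by (simp add: card_Un_disjoint)
    also have "card (io ` P) = card P" using io_inj by (simp add: card_image inj_on_subset)
    finally show ?thesis using cardcol by simp
  qed
  have rowBs: "Bs \<inter> ({i'} \<times> {1..k}) = R - B"
  proof -
    have rowE: "{i'} \<times> {1..k} \<subseteq> E" using i unfolding E_def idx_def by auto
    have "(i', j') \<in> B" using colB i by (auto simp: col_def)
    then show ?thesis using rowE unfolding B(2) R_def by auto
  qed
  have cardR2: "card (B \<inter> R) + card (R - B) = k - 1"
  proof -
    have "R = (B \<inter> R) \<union> (R - B)" by blast
    moreover have "(B \<inter> R) \<inter> (R - B) = {}" by blast
    ultimately have "card R = card (B \<inter> R) + card (R - B)"
      using finR by (metis card_Un_disjoint finite_Diff finite_Int)
    then show ?thesis using cardR by simp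
  qed
  have PE': "card P \<le> (n - 1) * (k - 1)"
  proof -
    have "card P \<le> card E'" using finE' by (intro card_mono) (auto simp: P_def)
    then show ?thesis by (simp add: E'_def card_idx)
  qed
  have nkeq: "n * k = (n - 1) * (k - 1) + n + k - 1"
  proof -
    obtain n' where n': "n = Suc n'" using k1 nk by (cases n) auto
    obtain k' where k': "k = Suc k'" using k1 by (cases k) auto
    show ?thesis unfolding n' k' by (simp add: algebra_simps)
  qed
  have codimK: "codim E K = n * k - fdim W" by (simp add: codim_def E_def card_idx W_def)
  have codimK': "codim E' K' = (n - 1) * (k - 1) - fdim W'" by (simp add: codim_def E'_def card_idx dirK')
  have partB: "codim E' K' + card (Bs \<inter> ({i'} \<times> {1..k})) \<le> codim E K"
    unfolding codimK codimK' rowBs using dimW dimW' cardB cardR2 PE' nkeq by linarith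
  have partC: "m_coindep E K ((Bs \<inter> ({i'} \<times> {1..k})) \<union> io ` Bs')"
    if cob': "m_cobasis E' K' Bs'" for Bs'
  proof -
    obtain B' where B': "m_basis E' K' B'" "Bs' = E' - B'" using cob' by (auto simp: m_cobasis_def)
    have spanB': "u = 0" if "u \<in> W'" "\<forall>p\<in>B'. u p = 0" for u
      using basis_spanning[OF finE' _ _ B'(1)] W'sub W'E' that unfolding dirK' by blast
    define C where "C = (Bs \<inter> ({i'} \<times> {1..k})) \<union> io ` Bs'"
    have CE: "C \<subseteq> E" unfolding C_def using B(2) ioE(1) B'(2) by auto
    have span: "\<forall>v\<in>W. (\<forall>x\<in>E - C. v x = 0) \<longrightarrow> v = 0"
    proof (intro ballI impI)
      fix v assume v: "v \<in> W" and vD: "\<forall>x\<in>E - C. v x = 0"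
      have colD: "col \<subseteq> E - C"
      proof
        fix x assume x: "x \<in> col"
        have "x \<notin> Bs" using x Bcol by (auto simp: col_def)
        moreover have "x \<notin> io ` Bs'"
        proof
          assume "x \<in> io ` Bs'"
          then obtain p where p: "p \<in> E'" "x = io p" using B'(2) by blast
          have "snd x = j'" using x by (auto simp: col_def)
          then show False using ioE(3)[OF p(1)] p(2) by simp
        qed
        ultimately show "x \<in> E - C" using x colE by (auto simp: C_def)
      qed
      have vW0: "v \<in> W0" using v vD colD by (auto simp: W0_def col_def)
      have dv0: "del v = 0"
      proof (rule spanB')
        show "del v \<in> W'" using vW0 by (simp add: W'_def)
        show "\<forall>p\<in>B'. del v p = 0"
        proof
          fix p assume p: "p \<in> B'"
          have pE: "p \<in> E'" using B'(1) p basis_sep[OF finE' _ B'(1)] W'sub dirK' by auto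
          have "io p \<notin> io ` Bs'" using p B'(2) io_inj by (auto dest: injD)
          moreover have "io p \<notin> Bs \<inter> ({i'} \<times> {1..k})" using ioE(2)[OF pE] by auto
          ultimately have "io p \<in> E - C" using ioE(1)[OF pE] by (auto simp: C_def)
          then show "del v p = 0" using vD del_in'[OF pE] by simp
        qed
      qed
      show "v = 0"
      proof (rule spanB[OF v], rule ballI)
        fix b assume b: "b \<in> B"
        have "b \<in> col \<or> b \<in> B \<inter> R \<or> b \<in> io ` P" using Bsplit b by blast
        then show "v b = 0"
        proof (elim disjE)
          assume "b \<in> col" then show ?thesis using colD vD by blast
        next
          assume bR: "b \<in> B \<inter> R"
          have "b \<notin> Bs" using bR B(2) by blast
          moreover have "b \<notin> io ` Bs'"
          proof
            assume "b \<in> io ` Bs'"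
            then obtain p where p: "p \<in> E'" "b = io p" using B'(2) by blast
            have "fst b = i'" using bR by (auto simp: R_def)
            then show False using ioE(2)[OF p(1)] p(2) by simp
          qed
          moreover have "b \<in> E" using b BE by blast
          ultimately show ?thesis using vD by (auto simp: C_def)
        next
          assume "b \<in> io ` P"
          then obtain p where p: "p \<in> E'" "b = io p" by (auto simp: P_def)
          have "del v p = 0" using dv0 by simp
          then show ?thesis using del_in'[OF p(1)] p(2) by simp
        qed
      qed
    qed
    have "m_coindep E K C"
      by (rule coindep_from_spanning[OF finE _ _ CE]) (use Wsub WE span in \<open>simp_all add: W_def\<close>)
    then show ?thesis by (simp add: C_def)
  qed
  show ?thesis
    using partA partB partC unfolding E_def E'_def io_def by blast
qed




lemma sqdet_det:
  fixes M :: "nat \<times> nat \<Rightarrow> 'a::comm_ring_1"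
  shows "sqdet k M = det (mat k k (\<lambda>(i, j). M (Suc i, Suc j)))"
proof -
  let ?A = "mat k k (\<lambda>(i, j). M (Suc i, Suc j))"
  have "det ?A = (\<Sum>q \<in> {q. q permutes {0..<k}}. signof q * (\<Prod>i = 0..<k. ?A $$ (i, q i)))"
    by (rule det_def') simp
  also have "\<dots> = (\<Sum>q \<in> {q. q permutes {0..<k}}. signof q * (\<Prod>i = 0..<k. M (Suc i, Suc (q i))))"
  proof (rule sum.cong[OF refl])
    fix q assume "q \<in> {q. q permutes {0..<k}}"
    then have q: "q permutes {0..<k}" by simp
    have "(\<Prod>i = 0..<k. ?A $$ (i, q i)) = (\<Prod>i = 0..<k. M (Suc i, Suc (q i)))"
    proof (rule prod.cong[OF refl])
      fix i assume i: "i \<in> {0..<k}"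
      then have "q i < k" using permutes_in_image[OF q] by simp
      then show "?A $$ (i, q i) = M (Suc i, Suc (q i))" using i by simp
    qed
    then show "signof q * (\<Prod>i = 0..<k. ?A $$ (i, q i)) = signof q * (\<Prod>i = 0..<k. M (Suc i, Suc (q i)))"
      by simp
  qed
  also have "\<dots> = sqdet k M"
    unfolding sqdet_def
  proof (rule sum.reindex_bij_witness[where j = "map_permutation {0..<k} Suc"
        and i = "map_permutation {1..k} (\<lambda>x. x - 1)"])
    have bij: "bij_betw Suc {0..<k} {1..k}"
      by (simp add: bij_betw_def image_Suc_atLeastLessThan atLeastLessThanSuc_atLeastAtMost)
    have bij2: "bij_betw (\<lambda>x. x - 1) {1..k} {0..<k}"
    proof -
      have "inj_on (\<lambda>x. x - 1) {1..k}" by (auto simp: inj_on_def)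
      moreover have "(\<lambda>x. x - 1) ` {1..k} = {0..<k}"
      proof
        show "(\<lambda>x. x - 1) ` {1..k} \<subseteq> {0..<k}" by auto
        show "{0..<k} \<subseteq> (\<lambda>x. x - 1) ` {1..k}"
        proof
          fix x assume "x \<in> {0..<k}"
          then have "Suc x \<in> {1..k}" "x = Suc x - 1" by auto
          then show "x \<in> (\<lambda>x. x - 1) ` {1..k}" by blast
        qed
      qed
      ultimately show ?thesis by (simp add: bij_betw_def)
    qed
    fix q assume "q \<in> {q. q permutes {0..<k}}"
    then have q: "q permutes {0..<k}" by simp
    show "map_permutation {1..k} (\<lambda>x. x - 1) (map_permutation {0..<k} Suc q) = q"
      by (rule map_permutation_compose_inv[OF bij q]) simp
    show "map_permutation {0..<k} Suc q \<in> {p. p permutes {1..k}}"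
      using map_permutation_permutes[OF bij q] by simp
    have sg: "sign (map_permutation {0..<k} Suc q) = sign q"
      by (rule sign_map_permutation) (use q in auto)
    have "(\<Prod>i\<in>{1..k}. M (i, map_permutation {0..<k} Suc q i))
        = (\<Prod>i\<in>Suc ` {0..<k}. M (i, map_permutation {0..<k} Suc q i))"
      by (simp add: image_Suc_atLeastLessThan atLeastLessThanSuc_atLeastAtMost)
    also have "\<dots> = (\<Prod>i\<in>{0..<k}. M (Suc i, map_permutation {0..<k} Suc q (Suc i)))"
      by (subst prod.reindex) auto
    also have "\<dots> = (\<Prod>i\<in>{0..<k}. M (Suc i, Suc (q i)))"
      by (rule prod.cong[OF refl]) (simp add: map_permutation_apply)
    finally show "of_int (sign (map_permutation {0..<k} Suc q)) *
        (\<Prod>i\<in>{1..k}. M (i, map_permutation {0..<k} Suc q i)) =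
        signof q * (\<Prod>i = 0..<k. M (Suc i, Suc (q i)))"
      using sg by simp
  next
    have bij: "bij_betw Suc {0..<k} {1..k}"
      by (simp add: bij_betw_def image_Suc_atLeastLessThan atLeastLessThanSuc_atLeastAtMost)
    have bij2: "bij_betw (\<lambda>x. x - 1) {1..k} {0..<k}"
    proof -
      have "inj_on (\<lambda>x. x - 1) {1..k}" by (auto simp: inj_on_def)
      moreover have "(\<lambda>x. x - 1) ` {1..k} = {0..<k}"
      proof
        show "(\<lambda>x. x - 1) ` {1..k} \<subseteq> {0..<k}" by auto
        show "{0..<k} \<subseteq> (\<lambda>x. x - 1) ` {1..k}"
        proof
          fix x assume "x \<in> {0..<k}"
          then have "Suc x \<in> {1..k}" "x = Suc x - 1" by auto
          then show "x \<in> (\<lambda>x. x - 1) ` {1..k}" by blast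
        qed
      qed
      ultimately show ?thesis by (simp add: bij_betw_def)
    qed
    fix p assume "p \<in> {p. p permutes {1..k}}"
    then have p: "p permutes {1..k}" by simp
    show "map_permutation {0..<k} Suc (map_permutation {1..k} (\<lambda>x. x - 1) p) = p"
      by (rule map_permutation_compose_inv[OF bij2 p]) simp
    show "map_permutation {1..k} (\<lambda>x. x - 1) p \<in> {q. q permutes {0..<k}}"
      using map_permutation_permutes[OF bij2 p] by simp
  qed
  finally show ?thesis by simp
qed


lemma sqdet_cong:
  assumes "\<forall>a\<in>{1..k}. \<forall>b\<in>{1..k}. M (a, b) = N (a, b)"
  shows "sqdet k M = sqdet k N"
  unfolding sqdet_def
proof (rule sum.cong[OF refl])
  fix p assume "p \<in> {p. p permutes {1..k}}"
  then have p: "p permutes {1..k}" by simp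
  have "(\<Prod>i\<in>{1..k}. M (i, p i)) = (\<Prod>i\<in>{1..k}. N (i, p i))"
  proof (rule prod.cong[OF refl])
    fix i assume i: "i \<in> {1..k}"
    then have "p i \<in> {1..k}" using permutes_in_image[OF p] by simp
    then show "M (i, p i) = N (i, p i)" using assms i by blast
  qed
  then show "of_int (sign p) * (\<Prod>i\<in>{1..k}. M (i, p i)) = of_int (sign p) * (\<Prod>i\<in>{1..k}. N (i, p i))"
    by simp
qed

lemma sqdet_zero_col:
  assumes "jj \<in> {1..k}" "\<forall>a\<in>{1..k}. M (a, jj) = 0"
  shows "sqdet k M = 0"
  unfolding sqdet_def
proof (rule sum.neutral, rule ballI)
  fix p assume "p \<in> {p. p permutes {1..k}}"
  then have p: "p permutes {1..k}" by simp
  have "inv_into UNIV p jj \<in> {1..k}" using assms(1) permutes_in_image[OF permutes_inv[OF p]] by simp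
  moreover have "p (inv_into UNIV p jj) = jj" using permutes_inverses(1)[OF p] by simp
  ultimately have "\<exists>i\<in>{1..k}. M (i, p i) = 0" using assms(2) by metis
  then have "(\<Prod>i\<in>{1..k}. M (i, p i)) = 0" by (metis finite_atLeastAtMost prod_zero)
  then show "of_int (sign p) * (\<Prod>i\<in>{1..k}. M (i, p i)) = 0" by simp
qed

lemma sqdet_unit_col:
  fixes M :: "nat \<times> nat \<Rightarrow> 'a::comm_ring_1"
  assumes a: "1 \<le> a" "a \<le> k" and jj: "1 \<le> jj" "jj \<le> k"
    and col: "\<forall>r\<in>{1..k}. M (r, jj) = (if r = a then 1 else 0)"
  shows "sqdet k M = (-1) ^ (a + jj) *
    sqdet (k - 1) (\<lambda>(r, t). M (if r < a then r else r + 1, if t < jj then t else t + 1))"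
proof -
  let ?A = "mat k k (\<lambda>(i, j). M (Suc i, Suc j))"
  have A: "?A \<in> carrier_mat k k" by simp
  have j: "jj - 1 < k" using jj by simp
  have "det ?A = (\<Sum>i<k. ?A $$ (i, jj - 1) * cofactor ?A i (jj - 1))"
    by (rule laplace_expansion_column[OF A j])
  also have "\<dots> = ?A $$ (a - 1, jj - 1) * cofactor ?A (a - 1) (jj - 1)
      + (\<Sum>i\<in>{..<k} - {a - 1}. ?A $$ (i, jj - 1) * cofactor ?A i (jj - 1))"
    using a by (subst sum.remove[of _ "a - 1"]) auto
  also have "(\<Sum>i\<in>{..<k} - {a - 1}. ?A $$ (i, jj - 1) * cofactor ?A i (jj - 1)) = 0"
  proof (rule sum.neutral, rule ballI)
    fix i assume i: "i \<in> {..<k} - {a - 1}"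
    then have "Suc i \<in> {1..k}" "Suc i \<noteq> a" using a by auto
    then have "M (Suc i, jj) = 0" using col by simp
    then show "?A $$ (i, jj - 1) * cofactor ?A i (jj - 1) = 0" using i j jj by simp
  qed
  also have "?A $$ (a - 1, jj - 1) = 1" using a jj col by simp
  finally have dA: "det ?A = cofactor ?A (a - 1) (jj - 1)" by simp
  have del: "mat_delete ?A (a - 1) (jj - 1) =
      mat (k - 1) (k - 1) (\<lambda>(i, j). (\<lambda>(r, t). M (if r < a then r else r + 1, if t < jj then t else t + 1)) (Suc i, Suc j))"
    by (rule eq_matI) (use a jj in \<open>auto simp: mat_delete_def\<close>)
  have sg: "(-1::'a) ^ (a - 1 + (jj - 1)) = (-1) ^ (a + jj)"
  proof -
    obtain a' where a': "a = Suc a'" using a by (cases a) auto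
    obtain b' where b': "jj = Suc b'" using jj by (cases jj) auto
    show ?thesis unfolding a' b' by simp
  qed
  show ?thesis
    unfolding sqdet_det[of k M] sqdet_det[of "k - 1"] dA cofactor_def del sg by simp
qed

lemma neg1_pow_diff:
  assumes "b \<le> x"
  shows "(-1::'a::comm_ring_1) ^ (x - b) = (-1) ^ x * (-1) ^ b"
proof -
  have "(-1::'a) ^ x = (-1) ^ (x - b) * (-1) ^ b" using assms by (simp add: power_add[symmetric])
  then have "(-1::'a) ^ x * (-1) ^ b = (-1) ^ (x - b) * ((-1) ^ b * (-1) ^ b)" by (simp add: mult.assoc)
  also have "(-1::'a) ^ b * (-1) ^ b = 1" by (simp add: power_add[symmetric] flip: mult_2)
  finally show ?thesis by simp
qed

lemma sign_list:
  assumes len: "length xs = k" and ge: "\<forall>t<k. t + 1 \<le> xs ! t"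
  shows "(-1::'a::comm_ring_1) ^ (\<Sum>a\<in>{1..k}. xs ! (a - 1) - a)
    = (-1) ^ sum_list xs * (-1) ^ (\<Sum>a\<in>{1..k}. a)"
proof -
  have "(-1::'a) ^ (\<Sum>a\<in>{1..k}. xs ! (a - 1) - a) = (\<Prod>a\<in>{1..k}. (-1) ^ (xs ! (a - 1) - a))"
    by (rule power_sum)
  also have "\<dots> = (\<Prod>a\<in>{1..k}. (-1) ^ (xs ! (a - 1)) * (-1) ^ a)"
  proof (rule prod.cong[OF refl])
    fix a assume "a \<in> {1..k}"
    then have a1: "a - 1 < k" "a - 1 + 1 = a" by auto
    then have "a \<le> xs ! (a - 1)" using ge[rule_format, OF a1(1)] by simp
    then show "(-1::'a) ^ (xs ! (a - 1) - a) = (-1) ^ (xs ! (a - 1)) * (-1) ^ a"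
      by (rule neg1_pow_diff)
  qed
  also have "\<dots> = (\<Prod>a\<in>{1..k}. (-1) ^ (xs ! (a - 1))) * (\<Prod>a\<in>{1..k}. (-1) ^ a)"
    by (rule prod.distrib)
  also have "(\<Prod>a\<in>{1..k}. (-1::'a) ^ (xs ! (a - 1))) = (-1) ^ (\<Sum>a\<in>{1..k}. xs ! (a - 1))"
    by (rule power_sum[symmetric])
  also have "(\<Prod>a\<in>{1..k}. (-1::'a) ^ a) = (-1) ^ (\<Sum>a\<in>{1..k}. a)"
    by (rule power_sum[symmetric])
  also have "(\<Sum>a\<in>{1..k}. xs ! (a - 1)) = sum_list xs"
  proof -
    have "(\<Sum>a\<in>{1..k}. xs ! (a - 1)) = (\<Sum>a\<in>Suc ` {0..<k}. xs ! (a - 1))"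
      by (simp add: image_Suc_atLeastLessThan atLeastLessThanSuc_atLeastAtMost)
    also have "\<dots> = (\<Sum>a\<in>{0..<k}. xs ! a)" by (subst sum.reindex) auto
    also have "\<dots> = sum_list xs" using len by (simp add: sum_list_sum_nth)
    finally show ?thesis .
  qed
  finally show ?thesis .
qed

lemma sorted_nth_ge:
  assumes "sorted_wrt (<) xs" "\<forall>x\<in>set xs. (1::nat) \<le> x"
  shows "t < length xs \<Longrightarrow> t + 1 \<le> xs ! t"
proof (induction t)
  case 0
  then show ?case using assms(2) nth_mem by fastforce
next
  case (Suc t)
  then have "xs ! t < xs ! Suc t" using sorted_wrt_nth_less[OF assms(1)] by simp
  then show ?case using Suc by simp
qed

lemma dropWhile_sorted_ge:
  "sorted xs \<Longrightarrow> x \<in> set (dropWhile (\<lambda>x. x < (a::nat)) xs) \<Longrightarrow> a \<le> x"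
  by (induction xs) (auto split: if_splits)


lemma sum_list_map_Suc: "sum_list (map Suc xs) = sum_list xs + length xs"
  by (induction xs) auto

lemma sorted_insert_shift:
  fixes c' :: "nat set" and i' :: nat
  assumes fin: "finite c'"
  shows "sorted_list_of_set (insert i' ((\<lambda>a. if a \<ge> i' then a + 1 else a) ` c'))
    = takeWhile (\<lambda>x. x < i') (sorted_list_of_set c') @ i' # map Suc (dropWhile (\<lambda>x. x < i') (sorted_list_of_set c'))"
    (is "sorted_list_of_set ?c = ?T @ i' # map Suc ?D")
proof -
  let ?L' = "sorted_list_of_set c'"
  have sL': "sorted ?L'" "distinct ?L'" "set ?L' = c'" using fin by auto
  have LTD: "?L' = ?T @ ?D" by simp
  have Tlt: "\<forall>x\<in>set ?T. x < i'" by (auto dest: set_takeWhileD)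
  have Dge: "\<forall>x\<in>set ?D. i' \<le> x" using dropWhile_sorted_ge[OF sL'(1)] by blast
  have sT: "sorted ?T" "distinct ?T" using sL' by (auto intro: sorted_takeWhile)
  have sD: "sorted ?D" "distinct ?D" using sL' by (auto intro: sorted_dropWhile)
  have h1: "\<forall>x\<in>set ?T. \<forall>y\<in>set (i' # map Suc ?D). x < y"
  proof (intro ballI)
    fix x y assume x: "x \<in> set ?T" and y: "y \<in> set (i' # map Suc ?D)"
    have xi: "x < i'" using Tlt x by blast
    show "x < y"
    proof (cases "y = i'")
      case True then show ?thesis using xi by simp
    next
      case False
      then obtain z where "z \<in> set ?D" "y = Suc z" using y by auto
      then show ?thesis using Dge xi by fastforce
    qed
  qed
  have h2: "sorted (i' # map Suc ?D)"
    using sD(1) Dge by (auto simp: sorted_map)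
  have sR: "sorted (?T @ i' # map Suc ?D)"
    using sT(1) h1 h2 by (auto simp: sorted_append less_imp_le)
  have h3: "i' \<notin> set (map Suc ?D)" using Dge by auto
  have h4: "set ?T \<inter> set (i' # map Suc ?D) = {}" using h1 by blast
  have dR: "distinct (?T @ i' # map Suc ?D)"
    using sT(2) sD(2) h3 h4 by (auto simp: distinct_map)
  have setR: "set (?T @ i' # map Suc ?D) = ?c"
  proof -
    have "c' = set ?T \<union> set ?D" using LTD sL'(3) by (metis set_append)

    have e1: "(\<lambda>a. if a \<ge> i' then a + 1 else a) ` set ?T = (\<lambda>a. a) ` set ?T"
      by (rule image_cong[OF refl]) (use Tlt in auto)
    have e2: "(\<lambda>a. if a \<ge> i' then a + 1 else a) ` set ?D = Suc ` set ?D"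
      by (rule image_cong[OF refl]) (use Dge in auto)
    have "(\<lambda>a. if a \<ge> i' then a + 1 else a) ` c' = set ?T \<union> Suc ` set ?D"
      by (subst \<open>c' = set ?T \<union> set ?D\<close>, simp only: image_Un e1 e2 image_ident)
    then show ?thesis by auto
  qed
  have fc: "finite ?c" using fin by simp
  have "?T @ i' # map Suc ?D = sorted_list_of_set ?c"
  proof (rule sorted_distinct_set_unique[OF sR dR])
    show "sorted (sorted_list_of_set ?c)" by (rule sorted_sorted_list_of_set)
    show "distinct (sorted_list_of_set ?c)" by (rule distinct_sorted_list_of_set)
    show "set (?T @ i' # map Suc ?D) = set (sorted_list_of_set ?c)"
      by (simp only: setR set_sorted_list_of_set[OF fc])
  qed
  then show ?thesis by simp
qed


lemma term_eq:
  fixes X :: "nat \<times> nat \<Rightarrow> 'a::comm_ring_1"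
  assumes i: "1 \<le> i'" "i' \<le> n" and j: "1 \<le> j'" "j' \<le> k"
    and Xcol: "\<forall>i\<in>{1..n}. X (i, j') = (if i = i' then 1 else 0)"
    and c': "c' \<subseteq> {1..n - 1}" "card c' = k - 1"
  shows "(-1) ^ (\<Sum>a\<in>{1..k}. sorted_list_of_set (insert i' ((\<lambda>a. if a \<ge> i' then a + 1 else a) ` c')) ! (a - 1) - a)
      * sqdet k (\<lambda>(a, b). X (sorted_list_of_set (insert i' ((\<lambda>a. if a \<ge> i' then a + 1 else a) ` c')) ! (a - 1), b))
    = (-1) ^ (i' + j') * ((-1) ^ (\<Sum>a\<in>{1..k - 1}. sorted_list_of_set c' ! (a - 1) - a)
      * sqdet (k - 1) (\<lambda>(a, b). delete_rc n k i' j' X (sorted_list_of_set c' ! (a - 1), b)))"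
proof -
  define sh where "sh = (\<lambda>a::nat. if a \<ge> i' then a + 1 else a)"
  define c where "c = insert i' (sh ` c')"
  define L' where "L' = sorted_list_of_set c'"
  define T where "T = takeWhile (\<lambda>x. x < i') L'"
  define D where "D = dropWhile (\<lambda>x. x < i') L'"
  define L where "L = sorted_list_of_set c"
  define m where "m = length T"
  have fin: "finite c'" using c'(1) finite_subset by blast
  have Leq: "L = T @ i' # map Suc D"
    unfolding L_def c_def sh_def T_def D_def L'_def by (rule sorted_insert_shift[OF fin])
  have sL': "sorted L'" "distinct L'" "set L' = c'" "length L' = k - 1"
    using fin c'(2) by (auto simp: L'_def)
  have LTD: "L' = T @ D" by (simp add: T_def D_def)
  have Tlt: "\<forall>x\<in>set T. x < i'" by (auto simp: T_def dest: set_takeWhileD)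
  have Dge: "\<forall>x\<in>set D. i' \<le> x" using dropWhile_sorted_ge[OF sL'(1)] by (auto simp: D_def)
  have k1: "1 \<le> k" using j by simp
  have lenD: "length D = k - 1 - m" using sL'(4) LTD by (simp add: m_def)
  have mk: "m \<le> k - 1" using sL'(4) LTD by (simp add: m_def)
  have lenL: "length L = k" using Leq lenD mk k1 by (simp add: m_def)
  have finc: "finite c" using fin by (simp add: c_def)
  have sL: "sorted_wrt (<) L" "distinct L" "set L = c"
    using finc by (auto simp: L_def strict_sorted_list_of_set)
  have cn: "c \<subseteq> {1..n}"
  proof
    fix x assume "x \<in> c"
    then have "x = i' \<or> (\<exists>y\<in>c'. x = sh y)" by (auto simp: c_def)
    then show "x \<in> {1..n}"
    proof
      assume "x = i'" then show ?thesis using i by simp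
    next
      assume "\<exists>y\<in>c'. x = sh y"
      then obtain y where y: "y \<in> c'" "x = sh y" by blast
      then have "1 \<le> y" "y \<le> n - 1" using c'(1) by auto
      then show ?thesis using y(2) i by (auto simp: sh_def)
    qed
  qed
  have sL'2: "sorted_wrt (<) L'" using fin by (simp add: L'_def strict_sorted_list_of_set)
  have n1: "\<forall>t<k - 1. L' ! t < i' \<or> True" by simp
  have N1: "L ! t = L' ! t" "L' ! t < i'" if "t < m" for t
  proof -
    have "L ! t = T ! t" using that by (simp add: Leq nth_append m_def)
    moreover have "L' ! t = T ! t" using that by (simp add: LTD nth_append m_def)
    moreover have "T ! t \<in> set T" using that by (simp add: m_def)
    ultimately show "L ! t = L' ! t" "L' ! t < i'" using Tlt by auto
  qed
  have N2: "L ! m = i'" by (simp add: Leq nth_append m_def)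
  have N3: "L ! t = Suc (L' ! (t - 1))" "i' \<le> L' ! (t - 1)" if "m < t" "t < k" for t
  proof -
    have tD: "t - 1 - m < length D" using that lenD by simp
    have "L ! t = (i' # map Suc D) ! (t - m)" using that by (simp add: Leq nth_append m_def)
    also have "\<dots> = map Suc D ! (t - m - 1)" using that by (simp add: nth_Cons')
    also have "\<dots> = Suc (D ! (t - 1 - m))" using tD by (simp add: diff_commute)
    finally have a: "L ! t = Suc (D ! (t - 1 - m))" .
    have nt: "\<not> (t - 1 < length T)" using that by (simp add: m_def)
    have b: "L' ! (t - 1) = D ! (t - 1 - m)" unfolding LTD nth_append using nt by (simp add: m_def)
    show "L ! t = Suc (L' ! (t - 1))" using a b by simp
    show "i' \<le> L' ! (t - 1)" using b Dge tD by (metis nth_mem)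
  qed
  define M where "M = (\<lambda>(a, b). X (L ! (a - 1), b))"
  have colM: "\<forall>r\<in>{1..k}. M (r, j') = (if r = m + 1 then 1 else 0)"
  proof
    fix r assume r: "r \<in> {1..k}"
    then have rl: "r - 1 < length L" using lenL by auto
    then have "L ! (r - 1) \<in> {1..n}" using sL(3) cn nth_mem by blast
    then have "M (r, j') = (if L ! (r - 1) = i' then 1 else 0)" using Xcol by (simp add: M_def)
    also have "(L ! (r - 1) = i') \<longleftrightarrow> r - 1 = m"
    proof -
      have ml: "m < length L" using lenL mk k1 by simp
      have "(L ! (r - 1) = L ! m) \<longleftrightarrow> r - 1 = m" using nth_eq_iff_index_eq[OF sL(2) rl ml] .
      then show ?thesis using N2 by simp
    qed
    finally show "M (r, j') = (if r = m + 1 then 1 else 0)" using r by auto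
  qed
  have mk2: "1 \<le> m + 1" "m + 1 \<le> k" using mk k1 by auto
  have det1: "sqdet k M = (-1) ^ (m + 1 + j') *
      sqdet (k - 1) (\<lambda>(r, t). M (if r < m + 1 then r else r + 1, if t < j' then t else t + 1))"
    by (rule sqdet_unit_col[OF mk2 j colM])
  have det2: "sqdet (k - 1) (\<lambda>(r, t). M (if r < m + 1 then r else r + 1, if t < j' then t else t + 1))
      = sqdet (k - 1) (\<lambda>(a, b). delete_rc n k i' j' X (L' ! (a - 1), b))"
  proof (rule sqdet_cong, intro ballI)
    fix r t assume r: "r \<in> {1..k - 1}" and t: "t \<in> {1..k - 1}"
    have rL': "r - 1 < length L'" using r sL'(4) by auto
    then have "L' ! (r - 1) \<in> c'" using sL'(3) nth_mem by blast
    then have mem: "(L' ! (r - 1), t) \<in> idx (n - 1) (k - 1)"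
      using c'(1) t by (auto simp: idx_def)
    have rhs: "delete_rc n k i' j' X (L' ! (r - 1), t)
        = X (if L' ! (r - 1) \<ge> i' then L' ! (r - 1) + 1 else L' ! (r - 1), if t \<ge> j' then t + 1 else t)"
      using mem by (simp add: delete_rc_def iota_def)
    show "(\<lambda>(r, t). M (if r < m + 1 then r else r + 1, if t < j' then t else t + 1)) (r, t)
        = (\<lambda>(a, b). delete_rc n k i' j' X (L' ! (a - 1), b)) (r, t)"
    proof (cases "r < m + 1")
      case True
      then have "r - 1 < m" using r by auto
      then have "L ! (r - 1) = L' ! (r - 1)" "L' ! (r - 1) < i'" using N1 by auto
      then show ?thesis using True rhs by (auto simp: M_def)
    next
      case False
      then have "m < r" "r < k" using r by auto
      then have "L ! r = Suc (L' ! (r - 1))" "i' \<le> L' ! (r - 1)" using N3 by auto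
      then show ?thesis using False rhs by (auto simp: M_def)
    qed
  qed
  have geL: "\<forall>t<k. t + 1 \<le> L ! t"
  proof (intro allI impI)
    fix t assume "t < k"
    moreover have "\<forall>x\<in>set L. 1 \<le> x" using sL(3) cn by auto
    ultimately show "t + 1 \<le> L ! t" using sorted_nth_ge[OF sL(1)] lenL by simp
  qed
  have geL': "\<forall>t<k - 1. t + 1 \<le> L' ! t"
  proof (intro allI impI)
    fix t assume "t < k - 1"
    moreover have "\<forall>x\<in>set L'. 1 \<le> x" using sL'(3) c'(1) by auto
    ultimately show "t + 1 \<le> L' ! t" using sorted_nth_ge[OF sL'2] sL'(4) by simp
  qed
  have sg1: "(-1::'a) ^ (\<Sum>a\<in>{1..k}. L ! (a - 1) - a) = (-1) ^ sum_list L * (-1) ^ (\<Sum>a\<in>{1..k}. a)"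
    by (rule sign_list[OF lenL geL])
  have sg2: "(-1::'a) ^ (\<Sum>a\<in>{1..k - 1}. L' ! (a - 1) - a) = (-1) ^ sum_list L' * (-1) ^ (\<Sum>a\<in>{1..k - 1}. a)"
    by (rule sign_list[OF sL'(4) geL'])
  have sumL: "sum_list L = sum_list T + i' + sum_list D + (k - 1 - m)"
    using lenD by (simp add: Leq sum_list_map_Suc)
  have sumL': "sum_list L' = sum_list T + sum_list D" by (simp add: LTD)
  have sumk: "(\<Sum>a\<in>{1..k}. a) = (\<Sum>a\<in>{1..k - 1}. a) + k"
  proof -
    obtain k' where "k = Suc k'" using k1 by (cases k) auto
    then show ?thesis by simp
  qed
  have expo: "sum_list L + (\<Sum>a\<in>{1..k}. a) + (m + 1 + j')
      = (i' + j' + (sum_list L' + (\<Sum>a\<in>{1..k - 1}. a))) + 2 * k"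
    using sumL sumL' sumk mk k1 by simp
  have "(-1::'a) ^ (\<Sum>a\<in>{1..k}. L ! (a - 1) - a) * (-1) ^ (m + 1 + j')
      = (-1) ^ (sum_list L + (\<Sum>a\<in>{1..k}. a) + (m + 1 + j'))"
    unfolding sg1 by (simp add: power_add)
  also have "\<dots> = (-1) ^ (i' + j' + (sum_list L' + (\<Sum>a\<in>{1..k - 1}. a)))"
    unfolding expo by (simp add: power_add power_mult)
  also have "\<dots> = (-1) ^ (i' + j') * (-1) ^ (\<Sum>a\<in>{1..k - 1}. L' ! (a - 1) - a)"
    unfolding sg2 by (simp add: power_add)
  finally have sgn: "(-1::'a) ^ (\<Sum>a\<in>{1..k}. L ! (a - 1) - a) * (-1) ^ (m + 1 + j')
      = (-1) ^ (i' + j') * (-1) ^ (\<Sum>a\<in>{1..k - 1}. L' ! (a - 1) - a)" .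
  have "(-1) ^ (\<Sum>a\<in>{1..k}. L ! (a - 1) - a) * sqdet k M
      = (-1) ^ (i' + j') * ((-1) ^ (\<Sum>a\<in>{1..k - 1}. L' ! (a - 1) - a)
        * sqdet (k - 1) (\<lambda>(a, b). delete_rc n k i' j' X (L' ! (a - 1), b)))"
  proof -
    let ?Q = "sqdet (k - 1) (\<lambda>(a, b). delete_rc n k i' j' X (L' ! (a - 1), b))"
    have "(-1) ^ (\<Sum>a\<in>{1..k}. L ! (a - 1) - a) * sqdet k M
        = ((-1) ^ (\<Sum>a\<in>{1..k}. L ! (a - 1) - a) * (-1) ^ (m + 1 + j')) * ?Q"
      unfolding det1 det2 by (simp only: mult.assoc)
    also have "\<dots> = ((-1) ^ (i' + j') * (-1) ^ (\<Sum>a\<in>{1..k - 1}. L' ! (a - 1) - a)) * ?Q"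
      by (simp only: sgn)
    finally show ?thesis by (simp only: mult.assoc)
  qed
  then show ?thesis unfolding M_def L_def c_def sh_def L'_def .
qed


lemma cullis_del:
  fixes X :: "nat \<times> nat \<Rightarrow> 'a::comm_ring_1"
  assumes i: "1 \<le> i'" "i' \<le> n" and j: "1 \<le> j'" "j' \<le> k"
    and Xcol: "\<forall>i\<in>{1..n}. X (i, j') = (if i = i' then 1 else 0)"
  shows "cullis n k X = (-1) ^ (i' + j') * cullis (n - 1) (k - 1) (delete_rc n k i' j' X)"
proof -
  define tm where "tm = (\<lambda>c. (-1) ^ (\<Sum>a\<in>{1..k}. sorted_list_of_set c ! (a - 1) - a)
      * sqdet k (\<lambda>(a, b). X (sorted_list_of_set c ! (a - 1), b)))"
  define tm' where "tm' = (\<lambda>c'. (-1) ^ (\<Sum>a\<in>{1..k - 1}. sorted_list_of_set c' ! (a - 1) - a)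
      * sqdet (k - 1) (\<lambda>(a, b). delete_rc n k i' j' X (sorted_list_of_set c' ! (a - 1), b)))"
  define C where "C = {c. c \<subseteq> {1..n} \<and> card c = k}"
  define Ci where "Ci = {c. c \<subseteq> {1..n} \<and> card c = k \<and> i' \<in> c}"
  define C' where "C' = {c. c \<subseteq> {1..n - 1} \<and> card c = k - 1}"
  define sh where "sh = (\<lambda>a::nat. if a \<ge> i' then a + 1 else a)"
  define ush where "ush = (\<lambda>b::nat. if b > i' then b - 1 else b)"
  define G where "G = (\<lambda>c'. insert i' (sh ` c'))"
  define H where "H = (\<lambda>c. ush ` (c - {i'}))"
  have k1: "1 \<le> k" using j by simp
  have ush_sh: "ush (sh a) = a" for a by (simp add: ush_def sh_def)
  have sh_ush: "sh (ush b) = b" if "b \<noteq> i'" for b using that by (auto simp: ush_def sh_def)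
  have sh_ne: "sh a \<noteq> i'" for a by (auto simp: sh_def)
  have inj_sh: "inj sh" by (metis ush_sh injI)
  have cullis1: "cullis n k X = (\<Sum>c\<in>C. tm c)" by (simp add: cullis_def tm_def C_def)
  have cullis2: "cullis (n - 1) (k - 1) (delete_rc n k i' j' X) = (\<Sum>c\<in>C'. tm' c)"
    by (simp add: cullis_def tm'_def C'_def)
  have finC: "finite C" unfolding C_def by (rule finite_subset[of _ "Pow {1..n}"]) auto
  have step1: "(\<Sum>c\<in>C. tm c) = (\<Sum>c\<in>Ci. tm c)"
  proof (rule sum.mono_neutral_right[OF finC])
    show "Ci \<subseteq> C" by (auto simp: C_def Ci_def)
    show "\<forall>c\<in>C - Ci. tm c = 0"
    proof
      fix c assume c: "c \<in> C - Ci"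
      then have cs: "c \<subseteq> {1..n}" "card c = k" "i' \<notin> c" by (auto simp: C_def Ci_def)
      have fc: "finite c" using cs(1) finite_subset by blast
      have "sqdet k (\<lambda>(a, b). X (sorted_list_of_set c ! (a - 1), b)) = 0"
      proof (rule sqdet_zero_col)
        show "j' \<in> {1..k}" using j by simp
        show "\<forall>a\<in>{1..k}. (\<lambda>(a, b). X (sorted_list_of_set c ! (a - 1), b)) (a, j') = 0"
        proof
          fix a assume a: "a \<in> {1..k}"
          have "a - 1 < length (sorted_list_of_set c)" using a cs(2) fc by auto
          then have "sorted_list_of_set c ! (a - 1) \<in> set (sorted_list_of_set c)" by (rule nth_mem)
          then have "sorted_list_of_set c ! (a - 1) \<in> c" using fc by simp
          then show "(\<lambda>(a, b). X (sorted_list_of_set c ! (a - 1), b)) (a, j') = 0"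
            using cs Xcol by auto
        qed
      qed
      then show "tm c = 0" by (simp add: tm_def)
    qed
  qed
  have step2: "(\<Sum>c'\<in>C'. tm (G c')) = (\<Sum>c\<in>Ci. tm c)"
  proof (rule sum.reindex_bij_witness[where i = H and j = G])
    fix c' assume "c' \<in> C'"
    then have c': "c' \<subseteq> {1..n - 1}" "card c' = k - 1" by (auto simp: C'_def)
    have "G c' - {i'} = sh ` c'" using sh_ne by (auto simp: G_def)
    then show "H (G c') = c'" by (simp add: H_def image_image ush_sh)
    have "G c' \<subseteq> {1..n}"
    proof
      fix x assume "x \<in> G c'"
      then have "x = i' \<or> (\<exists>y\<in>c'. x = sh y)" by (auto simp: G_def)
      then show "x \<in> {1..n}"
      proof
        assume "x = i'" then show ?thesis using i by simp
      next
        assume "\<exists>y\<in>c'. x = sh y"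
        then obtain y where y: "y \<in> c'" "x = sh y" by blast
        then have "1 \<le> y" "y \<le> n - 1" using c' by auto
        then show ?thesis using y(2) i by (auto simp: sh_def)
      qed
    qed
    moreover have "card (G c') = k"
    proof -
      have fc': "finite c'" using c'(1) finite_subset by blast
      have "card (sh ` c') = card c'" using inj_sh by (simp add: card_image inj_on_subset)
      moreover have "i' \<notin> sh ` c'" using sh_ne by blast
      ultimately show ?thesis using fc' c'(2) k1 by (simp add: G_def)
    qed
    ultimately show "G c' \<in> Ci" by (simp add: Ci_def G_def)
  next
    fix c assume "c \<in> Ci"
    then have c: "c \<subseteq> {1..n}" "card c = k" "i' \<in> c" by (auto simp: Ci_def)
    have fc: "finite c" using c(1) finite_subset by blast
    have "sh ` ush ` (c - {i'}) = c - {i'}"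
    proof -
      have "sh ` ush ` (c - {i'}) = (\<lambda>b. sh (ush b)) ` (c - {i'})" by (simp add: image_image)
      also have "\<dots> = (\<lambda>b. b) ` (c - {i'})" by (rule image_cong[OF refl]) (simp add: sh_ush)
      finally show ?thesis by simp
    qed
    then show "G (H c) = c" using c(3) by (auto simp: G_def H_def)
    have "H c \<subseteq> {1..n - 1}"
    proof
      fix x assume "x \<in> H c"
      then obtain b where b: "b \<in> c" "b \<noteq> i'" "x = ush b" by (auto simp: H_def)
      then have "1 \<le> b" "b \<le> n" using c(1) by auto
      then show "x \<in> {1..n - 1}" using b i by (auto simp: ush_def)
    qed
    moreover have "card (H c) = k - 1"
    proof -
      have "inj_on ush (c - {i'})" by (rule inj_onI) (metis sh_ush DiffD2 singletonI)
      then have "card (H c) = card (c - {i'})" by (simp add: H_def card_image)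
      also have "\<dots> = k - 1" using c fc by simp
      finally show ?thesis .
    qed
    ultimately show "H c \<in> C'" by (simp add: C'_def)
  qed simp
  have step3: "(\<Sum>c'\<in>C'. tm (G c')) = (\<Sum>c'\<in>C'. (-1) ^ (i' + j') * tm' c')"
  proof (rule sum.cong[OF refl])
    fix c' assume "c' \<in> C'"
    then have c': "c' \<subseteq> {1..n - 1}" "card c' = k - 1" by (auto simp: C'_def)
    show "tm (G c') = (-1) ^ (i' + j') * tm' c'"
      unfolding tm_def tm'_def G_def sh_def by (rule term_eq[OF i j Xcol c'])
  qed
  show ?thesis
    unfolding cullis1 cullis2 step1 step2[symmetric] step3 by (simp add: sum_distrib_left)
qed


theorem mainTheorem6:
  fixes K :: "(nat \<times> nat \<Rightarrow> 'a::field) set"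
    and n k i' j' :: nat and Bs :: "(nat \<times> nat) set" and c :: "nat \<Rightarrow> 'a"
  assumes "k > 1" and "n \<ge> k"
    and "linear_variety (idx n k) K"
    and "m_cobasis (idx n k) K Bs"
    and "j' \<in> {1..k}" and "Bs \<inter> ({1..n} \<times> {j'}) = {}"
    and "i' \<in> {1..n}"
  defines "K' \<equiv> {delete_rc n k i' j' X |X. X \<in> K \<and> (\<forall>i\<in>{1..n}. X (i, j') = c i)}"
  shows "linear_variety (idx (n - 1) (k - 1)) K'
    \<and> codim (idx (n - 1) (k - 1)) K' + card (Bs \<inter> ({i'} \<times> {1..k})) \<le> codim (idx n k) K
    \<and> (\<forall>Bs'. m_cobasis (idx (n - 1) (k - 1)) K' Bs' \<longrightarrow>
          m_coindep (idx n k) K ((Bs \<inter> ({i'} \<times> {1..k})) \<union> iota i' j' ` Bs'))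
    \<and> ((\<forall>X\<in>K. cullis n k X = 0) \<and> (\<forall>i\<in>{1..n}. c i = (if i = i' then 1 else 0))
          \<longrightarrow> (\<forall>X'\<in>K'. cullis (n - 1) (k - 1) X' = 0))"
proof -
  have K'eq: "K' = {delete_rc n k i' j' X |X. X \<in> K \<and> (\<forall>i\<in>{1..n}. X (i, j') = c i)}"
    by (simp add: K'_def)
  have abc: "linear_variety (idx (n - 1) (k - 1)) K'
    \<and> codim (idx (n - 1) (k - 1)) K' + card (Bs \<inter> ({i'} \<times> {1..k})) \<le> codim (idx n k) K
    \<and> (\<forall>Bs'. m_cobasis (idx (n - 1) (k - 1)) K' Bs' \<longrightarrow>
          m_coindep (idx n k) K ((Bs \<inter> ({i'} \<times> {1..k})) \<union> iota i' j' ` Bs'))"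
    by (rule parts_abc[OF assms(1-7) K'eq])
  have d: "(\<forall>X'\<in>K'. cullis (n - 1) (k - 1) X' = 0)"
    if h: "(\<forall>X\<in>K. cullis n k X = 0) \<and> (\<forall>i\<in>{1..n}. c i = (if i = i' then 1 else 0))"
  proof
    fix X' assume "X' \<in> K'"
    then obtain X where X: "X' = delete_rc n k i' j' X" "X \<in> K" "\<forall>i\<in>{1..n}. X (i, j') = c i"
      unfolding K'eq by blast
    have Xcol: "\<forall>i\<in>{1..n}. X (i, j') = (if i = i' then 1 else 0)" using X(3) h by simp
    have i: "1 \<le> i'" "i' \<le> n" and j: "1 \<le> j'" "j' \<le> k" using assms(5,7) by auto
    have "cullis n k X = (-1) ^ (i' + j') * cullis (n - 1) (k - 1) X'"
      unfolding X(1) by (rule cullis_del[OF i j Xcol])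
    moreover have "cullis n k X = 0" using h X(2) by blast
    ultimately show "cullis (n - 1) (k - 1) X' = 0" by simp
  qed
  show ?thesis using abc d by blast
qed

end
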